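(* For all sufficiently large $k$ the following holds. Let $\tau=k^{-13}$, $d=4^k$ and $t=\frac1{\tau^2}\big(\lceil4k^2\ln(2k)\rceil\lceil4\ln(1/\tau)\rceil+\ln(1/\tau)+10\ln d\big)$. Let $e=(v_1,\dots,v_k)$ be a hyperedge of a $k$-Label Cover instance such that $|(\pi^{v_i,e})^{-1}(l)|\le d$ for all $i\in[k]$, $l\in[N]$. Let $h(\vec y)=\mathrm{sgn}(\sum_{i\in[k]}\langle\vec w_i,\vec y_{v_i}\rangle-\theta)$ with $\vec w_i\in\mathbb R^M$, and let $r\in[k]$ satisfy $|C_\tau(\vec w_r)|\ge t$. Define $\tilde{\vec w}_r=\mathrm{truncate}(\vec w_r,B_t(\vec w_r))$, $\tilde{\vec w}_i=\vec w_i$ for $i\ne r$, $\vec a_r=\vec w_r-\tilde{\vec w}_r$, $\tilde\theta=\theta-\mathbb E_{\mathcal E_e}[\langle\vec a_r,\vec y_{v_r}\rangle\mid b=0]$, and $\tilde h(\vec y)=\mathrm{sgn}(\sum_{i\in[k]}\langle\tilde{\vec w}_i,\vec y_{v_i}\rangle-\tilde\theta)$. Then for each $b\in\{0,1\}$, $$\Big|\mathbb E_{\mathcal E_e}[\tilde h(\vec y)\mid b]-\mathbb E_{\mathcal E_e}[h(\vec y)\mid b]\Big|\le\frac1{k^2}.$$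
   Context: $\mathrm{sgn}(t)=1$ if $t\ge0$, else $0$. A $k$-Label Cover instance is a $k$-uniform hypergraph on $V$ with a multiset $E$ of hyperedges $e=(v_1,\dots,v_k)$ of distinct vertices, each with projections $\pi^{v_i,e}:[M]\to[N]$. Fix distributions $\mathcal D_0,\mathcal D_1$ on $\{0,1\}^k$ with matching moments up to degree $4$ (i.e. $\mathbb E[\prod_{i\in S}x_i]$ agrees under both for every multiset $S\subseteq[k]$ with $|S|\le4$). $\mathcal E_e$ is the distribution of $(\vec y,b)$, $\vec y\in\{0,1\}^{V\times M}$: $b$ a uniform bit; $\vec x=(x_i^{(l)})_{i\in[k],l\in[N]}$ with $N$ columns i.i.d. from $\mathcal D_b$; $\vec y_v=\vec0$ for $v\notin e$; independently for each $i\in[k],j\in[M]$, $y_{v_i}^{(j)}=x_i^{(\pi^{v_i,e}(j))}$ w.p. $1-1/k^2$ and a fresh uniform bit w.p. $1/k^2$. For $\vec u\in\mathbb R^n$ order indices $i_1,\dots,i_n$ by decreasing $|u^{(i)}|$ (ties by increasing index); $B_t(\vec u)=\{i_1,\dots,i_{\min(t,n)}\}$ (with $t$ rounded down if not an integer); $\sigma_m^2=\sum_{j\ge m}|u^{(i_j)}|^2$; $c_\tau(\vec u)$ is the smallest $m$ with $|u^{(i_m)}|\le\tau\sigma_m$ ($+\infty$ if none); $C_\tau(\vec u)=\{i_1,\dots,i_{c_\tau(\vec u)-1}\}$ if finite, else $[n]$. $\mathrm{truncate}(\vec u,S)$ agrees with $\vec u$ on $S$ and is $0$ elsewhere. *)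

theory Defs
  imports "HOL-Probability.Probability" "HOL-Library.Multiset"
begin

(* Conventions: [n] = {0..<n} (0-based). Vectors in R^n are functions nat => real,
   only the coordinates < n matter. *)

definition sgn01 :: "real \<Rightarrow> real" where
  "sgn01 t = (if t \<ge> 0 then 1 else 0)"

(* indices 0..<n ordered by decreasing |u i|, ties broken by increasing index
   (sort_key is a stable insertion sort, and [0..<n] is increasing) *)
definition idx_order :: "nat \<Rightarrow> (nat \<Rightarrow> real) \<Rightarrow> nat list" where
  "idx_order n u = sort_key (\<lambda>i. - \<bar>u i\<bar>) [0..<n]"

definition Bset :: "real \<Rightarrow> nat \<Rightarrow> (nat \<Rightarrow> real) \<Rightarrow> nat set" where
  "Bset t n u = set (take (nat \<lfloor>t\<rfloor>) (idx_order n u))"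

(* sigma_m^2 with 0-based position m: sum over positions j >= m *)
definition sigma2 :: "nat \<Rightarrow> (nat \<Rightarrow> real) \<Rightarrow> nat \<Rightarrow> real" where
  "sigma2 n u m = (\<Sum>j\<in>{m..<n}. (u (idx_order n u ! j))\<^sup>2)"

(* C_tau(u): with 0-based position m0 = c_tau - 1 *)
definition Cset :: "real \<Rightarrow> nat \<Rightarrow> (nat \<Rightarrow> real) \<Rightarrow> nat set" where
  "Cset \<tau> n u =
     (let ord = idx_order n u;
          P = (\<lambda>m. m < n \<and> \<bar>u (ord ! m)\<bar> \<le> \<tau> * sqrt (sigma2 n u m))
      in if \<exists>m. P m then set (take (LEAST m. P m) ord) else {..<n})"

definition truncate :: "(nat \<Rightarrow> real) \<Rightarrow> nat set \<Rightarrow> nat \<Rightarrow> real" where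
  "truncate u S = (\<lambda>i. if i \<in> S then u i else 0)"

(* noise for one coordinate: None = copy (prob 1-1/k^2), Some c = fresh uniform bit c *)
definition noise_pmf :: "nat \<Rightarrow> bool option pmf" where
  "noise_pmf k = bind_pmf (bernoulli_pmf (1 / (real k)\<^sup>2))
     (\<lambda>f. if f then map_pmf Some (bernoulli_pmf (1/2)) else return_pmf None)"

(* The distribution E_e conditioned on the bit b (False = 0, True = 1).
   Hyperedge e = (vs 0, ..., vs (k-1)); pi i = pi^{v_i,e}; D b = D_b on {0,1}^k.
   y v j = y_v^{(j)}; X l i = x_i^{(l)}. *)
definition edge_dist :: "nat \<Rightarrow> nat \<Rightarrow> nat \<Rightarrow> (nat \<Rightarrow> nat) \<Rightarrow> (nat \<Rightarrow> nat \<Rightarrow> nat)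
    \<Rightarrow> (bool \<Rightarrow> (nat \<Rightarrow> bool) pmf) \<Rightarrow> bool \<Rightarrow> (nat \<Rightarrow> nat \<Rightarrow> bool) pmf" where
  "edge_dist k N M vs \<pi> D b =
     bind_pmf (Pi_pmf {..<N} (\<lambda>_. False) (\<lambda>_. D b)) (\<lambda>X.
       map_pmf (\<lambda>Z v j.
           if v \<in> vs ` {..<k} \<and> j < M then
             (let i = inv_into {..<k} vs v in
               case Z (i, j) of None \<Rightarrow> X (\<pi> i j) i | Some c \<Rightarrow> c)
           else False)
         (Pi_pmf ({..<k} \<times> {..<M}) None (\<lambda>_. noise_pmf k)))"

definition ip :: "nat \<Rightarrow> (nat \<Rightarrow> real) \<Rightarrow> (nat \<Rightarrow> bool) \<Rightarrow> real" where
  "ip M w y = (\<Sum>j<M. w j * of_bool (y j))"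

end

theory Submission
  imports Defs "HOL-Real_Asymp.Real_Asymp"
begin


lemma int_bdd:
  fixes f :: "'a \<Rightarrow> real"
  assumes "\<And>x. \<bar>f x\<bar> \<le> B"
  shows "integrable (measure_pmf p) f"
  by (rule measure_pmf.integrable_const_bound[where B=B]) (use assms in auto)

lemma exp_bind_pmf:
  fixes g :: "'b \<Rightarrow> real"
  assumes "\<And>y. \<bar>g y\<bar> \<le> B"
  shows "measure_pmf.expectation (bind_pmf M N) g = measure_pmf.expectation M (\<lambda>x. measure_pmf.expectation (N x) g)"
  unfolding measure_pmf_bind
  apply (rule integral_bind[where K="count_space UNIV" and B=B and B'=1])
  using assms measurable_measure_pmf[of N] by (auto intro!: prob_space.emeasure_space_1 simp: measure_pmf.emeasure_space_1 )

lemma noise_exp: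
  fixes \<phi> :: "bool option \<Rightarrow> real"
  assumes "k > 0"
  shows "measure_pmf.expectation (noise_pmf k) \<phi> =
     (1 - 1/(real k)^2) * \<phi> None + 1/(real k)^2 / 2 * (\<phi> (Some True) + \<phi> (Some False))"
proof -
  have q: "0 \<le> 1/(real k)^2" "1/(real k)^2 \<le> 1" using assms by (auto simp: field_simps)
  have b: "\<bar>\<phi> y\<bar> \<le> \<bar>\<phi> None\<bar> + \<bar>\<phi> (Some True)\<bar> + \<bar>\<phi> (Some False)\<bar>" for y
    by (cases y; cases "the y") auto
  show ?thesis unfolding noise_pmf_def
    apply (subst exp_bind_pmf[OF b])
    using q by (simp add: algebra_simps add_divide_distrib)
qed

lemma prod2_Pi:
  fixes g :: "'i \<Rightarrow> 'a \<Rightarrow> real"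
  assumes "finite I" "i \<in> I" "j \<in> I" "i \<noteq> j"
    and "\<And>x. 0 \<le> g i x" "\<And>x. 0 \<le> g j x" "\<And>x. \<bar>g i x\<bar> \<le> B" "\<And>x. \<bar>g j x\<bar> \<le> B"
  shows "measure_pmf.expectation (Pi_pmf I dflt p) (\<lambda>z. g i (z i) * g j (z j)) =
         measure_pmf.expectation (p i) (g i) * measure_pmf.expectation (p j) (g j)"
proof -
  define G where "G x = (if x = i then g i else if x = j then g j else (\<lambda>_. 1::real))" for x
  have e: "(\<Prod>x\<in>I. G x (z x)) = g i (z i) * g j (z j)" for z
  proof -
    have "I = insert i (insert j (I - {i,j}))" using assms by auto
    then have "(\<Prod>x\<in>I. G x (z x)) = G i (z i) * (G j (z j) * (\<Prod>x\<in>I-{i,j}. G x (z x)))"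
      using assms by (metis (no_types, lifting) finite_Diff finite_insert insert_iff prod.insert Diff_iff insertCI)
    also have "(\<Prod>x\<in>I-{i,j}. G x (z x)) = 1" by (rule prod.neutral) (auto simp: G_def)
    finally show ?thesis using assms by (simp add: G_def)
  qed
  have "measure_pmf.expectation (Pi_pmf I dflt p) (\<lambda>z. \<Prod>x\<in>I. G x (z x)) = (\<Prod>x\<in>I. measure_pmf.expectation (p x) (G x))"
    apply (rule expectation_prod_Pi_pmf)
    using assms by (auto simp: G_def intro!: int_bdd[where B="max B 1"] simp: le_max_iff_disj)
  also have "(\<Prod>x\<in>I. measure_pmf.expectation (p x) (G x)) = measure_pmf.expectation (p i) (g i) * measure_pmf.expectation (p j) (g j)"
  proof -
    have "I = insert i (insert j (I - {i,j}))" using assms by auto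
    then have "(\<Prod>x\<in>I. measure_pmf.expectation (p x) (G x)) = measure_pmf.expectation (p i) (G i) * (measure_pmf.expectation (p j) (G j) * (\<Prod>x\<in>I-{i,j}. measure_pmf.expectation (p x) (G x)))"
      using assms by (metis (no_types, lifting) finite_Diff finite_insert insert_iff prod.insert Diff_iff insertCI)
    also have "(\<Prod>x\<in>I-{i,j}. measure_pmf.expectation (p x) (G x)) = 1" by (rule prod.neutral) (auto simp: G_def)
    finally show ?thesis using assms by (simp add: G_def)
  qed
  finally show ?thesis by (simp add: e)
qed

lemma exp_component:
  fixes g :: "'a \<Rightarrow> real"
  assumes "finite I" "i \<in> I"
  shows "measure_pmf.expectation (Pi_pmf I dflt p) (\<lambda>z. g (z i)) = measure_pmf.expectation (p i) g"
proof -
  have "measure_pmf.expectation (Pi_pmf I dflt p) (\<lambda>z. g (z i)) = measure_pmf.expectation (map_pmf (\<lambda>z. z i) (Pi_pmf I dflt p)) g"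
    by simp
  also have "map_pmf (\<lambda>z. z i) (Pi_pmf I dflt p) = p i" using Pi_pmf_component[OF assms(1), of i dflt p] assms(2) by (simp cong: if_cong)
  finally show ?thesis .
qed

lemma pi_var:
  fixes f :: "'i \<Rightarrow> 'a \<Rightarrow> real"
  assumes I: "finite I" and bd: "\<And>i x. i \<in> I \<Longrightarrow> \<bar>f i x\<bar> \<le> B"
    and m0: "\<And>i. i \<in> I \<Longrightarrow> measure_pmf.expectation (p i) (f i) = 0"
  shows "measure_pmf.expectation (Pi_pmf I dflt p) (\<lambda>z. (\<Sum>i\<in>I. f i (z i))\<^sup>2) =
         (\<Sum>i\<in>I. measure_pmf.expectation (p i) (\<lambda>x. (f i x)\<^sup>2))"
proof -
  let ?P = "Pi_pmf I dflt p"
  have B0: "0 \<le> B" if "i \<in> I" for i using bd[OF that, of undefined] by linarith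
  have intf: "integrable (measure_pmf q) (\<lambda>z. f i (z i) * f j (z j))" if "i \<in> I" "j \<in> I" for i j and q :: "('i \<Rightarrow> 'a) pmf"
    apply (rule int_bdd[where B="B*B"]) using bd[OF that(1)] bd[OF that(2)]
    by (simp add: abs_mult mult_mono' B0[OF that(1)])
  have cross: "measure_pmf.expectation ?P (\<lambda>z. f i (z i) * f j (z j)) =
       (if i = j then measure_pmf.expectation (p i) (\<lambda>x. (f i x)\<^sup>2) else 0)" if ij: "i \<in> I" "j \<in> I" for i j
  proof (cases "i = j")
    case True
    then show ?thesis using exp_component[OF I ij(1), where g="\<lambda>x. (f i x)\<^sup>2" and dflt=dflt and p=p]
      by (simp add: power2_eq_square)
  next
    case False
    define g where "g = (\<lambda>l x. f l x + B)"
    have "measure_pmf.expectation ?P (\<lambda>z. g i (z i) * g j (z j)) = measure_pmf.expectation (p i) (g i) * measure_pmf.expectation (p j) (g j)"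
      apply (rule prod2_Pi[where B="2*B"]) using I ij False bd[OF ij(1)] bd[OF ij(2)]
      by (auto simp: g_def abs_le_iff) (smt (verit))+
    also have "measure_pmf.expectation (p i) (g i) = B"
      unfolding g_def using m0[OF ij(1)] int_bdd[of "f i" B] bd[OF ij(1)] by simp
    also have "measure_pmf.expectation (p j) (g j) = B"
      unfolding g_def using m0[OF ij(2)] int_bdd[of "f j" B] bd[OF ij(2)] by simp
    finally have 1: "measure_pmf.expectation ?P (\<lambda>z. g i (z i) * g j (z j)) = B * B" .
    have e: "(\<lambda>z. g i (z i) * g j (z j)) = (\<lambda>z. f i (z i) * f j (z j) + (B * f i (z i) + (B * f j (z j) + B * B)))"
      by (auto simp: g_def algebra_simps)
    have ii: "integrable (measure_pmf ?P) (\<lambda>z. f i (z i))" by (rule int_bdd[where B=B]) (use bd ij in auto)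
    have jj: "integrable (measure_pmf ?P) (\<lambda>z. f j (z j))" by (rule int_bdd[where B=B]) (use bd ij in auto)
    have ei: "measure_pmf.expectation ?P (\<lambda>z. f i (z i)) = 0" using exp_component[OF I ij(1), where g="f i" and dflt=dflt and p=p] m0 ij by simp
    have ej: "measure_pmf.expectation ?P (\<lambda>z. f j (z j)) = 0" using exp_component[OF I ij(2), where g="f j" and dflt=dflt and p=p] m0 ij by simp
    from 1 have "measure_pmf.expectation ?P (\<lambda>z. f i (z i) * f j (z j)) + (B * 0 + (B * 0 + B*B)) = B * B"
      unfolding e using intf[OF ij] ii jj ei ej
      by (subst (asm) Bochner_Integration.integral_add; (auto intro!: Bochner_Integration.integral_add)?)
    then show ?thesis using False by simp
  qed
  have "(\<lambda>z. (\<Sum>i\<in>I. f i (z i))\<^sup>2) = (\<lambda>z. \<Sum>i\<in>I. \<Sum>j\<in>I. f i (z i) * f j (z j))"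
    by (auto simp: power2_eq_square sum_product)
  then have "measure_pmf.expectation ?P (\<lambda>z. (\<Sum>i\<in>I. f i (z i))\<^sup>2) = (\<Sum>i\<in>I. \<Sum>j\<in>I. measure_pmf.expectation ?P (\<lambda>z. f i (z i) * f j (z j)))"
    using intf by (simp add: Bochner_Integration.integral_sum integrable_sum)
  also have "\<dots> = (\<Sum>i\<in>I. \<Sum>j\<in>I. (if i = j then measure_pmf.expectation (p i) (\<lambda>x. (f i x)\<^sup>2) else 0))"
    by (intro sum.cong refl) (simp add: cross)
  also have "\<dots> = (\<Sum>i\<in>I. measure_pmf.expectation (p i) (\<lambda>x. (f i x)\<^sup>2))"
    using I by (simp add: sum.delta)
  finally show ?thesis .
qed

lemma pi_split:
  assumes "finite I" "c \<notin> I"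
  shows "Pi_pmf (insert c I) dflt p = bind_pmf (Pi_pmf I dflt p) (\<lambda>f. map_pmf (\<lambda>y. f(c:=y)) (p c))"
  using assms by (simp add: Pi_pmf_insert' map_pmf_def) (subst bind_commute_pmf; simp)

lemma prob_exp: "measure_pmf.prob p E = measure_pmf.expectation p (indicator E)"
  by simp

lemma AC:
  assumes "finite J"
  shows "finite I \<Longrightarrow> J \<subseteq> I \<Longrightarrow>
    (\<And>z z'. z \<in> E \<Longrightarrow> z' \<in> E \<Longrightarrow> (\<forall>c\<in>I-J. z c = z' c) \<Longrightarrow> \<forall>c\<in>J. \<phi> c (z c) = \<phi> c (z' c)) \<Longrightarrow>
    (\<And>c v. c \<in> J \<Longrightarrow> measure_pmf.prob (p c) {x. \<phi> c x = v} \<le> \<rho>) \<Longrightarrow> 0 \<le> \<rho> \<Longrightarrow>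
    measure_pmf.prob (Pi_pmf I dflt p) E \<le> \<rho> ^ card J"
  using assms
proof (induction J arbitrary: I E rule: finite_induct)
  case empty
  then show ?case by simp
next
  case (insert c J)
  define I' where "I' = I - {c}"
  have I: "I = insert c I'" "finite I'" "c \<notin> I'" using insert by (auto simp: I'_def)
  define E' where "E' = {f. \<exists>y. f(c:=y) \<in> E}"
  have "measure_pmf.prob (Pi_pmf I dflt p) E =
     measure_pmf.expectation (Pi_pmf I' dflt p) (\<lambda>f. measure_pmf.expectation (map_pmf (\<lambda>y. f(c:=y)) (p c)) (indicator E))"
    unfolding prob_exp I(1) pi_split[OF I(2,3)]
    by (rule exp_bind_pmf[where B=1]) (auto simp: indicator_def)
  also have "\<dots> \<le> measure_pmf.expectation (Pi_pmf I' dflt p) (\<lambda>f. \<rho> * indicator E' f)"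
  proof (rule integral_mono)
    show "integrable (measure_pmf (Pi_pmf I' dflt p)) (\<lambda>f. measure_pmf.expectation (map_pmf (\<lambda>y. f(c:=y)) (p c)) (indicator E :: _ \<Rightarrow> real))"
      by (rule int_bdd[where B=1]) (metis prob_exp abs_of_nonneg measure_nonneg measure_pmf.prob_le_1)
    show "integrable (measure_pmf (Pi_pmf I' dflt p)) (\<lambda>f. \<rho> * indicator E' f)"
      by (rule int_bdd[where B="\<bar>\<rho>\<bar>"]) (auto simp: indicator_def)
    fix f
    show "measure_pmf.expectation (map_pmf (\<lambda>y. f(c:=y)) (p c)) (indicator E) \<le> \<rho> * indicator E' f"
    proof (cases "f \<in> E'")
      case False
      then have "{y. f(c:=y) \<in> E} = {}" by (auto simp: E'_def)
      then show ?thesis using False by (simp add: prob_exp[symmetric] vimage_def)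
    next
      case True
      then obtain y0 where y0: "f(c:=y0) \<in> E" by (auto simp: E'_def)
      have "{y. f(c:=y) \<in> E} \<subseteq> {y. \<phi> c y = \<phi> c y0}"
      proof
        fix y assume "y \<in> {y. f(c:=y) \<in> E}"
        then have yE: "f(c:=y) \<in> E" by simp
        have ag: "\<forall>c'\<in>I - insert c J. (f(c:=y)) c' = (f(c:=y0)) c'" by simp
        have "\<forall>c'\<in>insert c J. \<phi> c' ((f(c:=y)) c') = \<phi> c' ((f(c:=y0)) c')"
          by (rule insert.prems(3)[OF yE y0 ag])
        then show "y \<in> {y. \<phi> c y = \<phi> c y0}" by auto
      qed
      then have "measure_pmf.prob (p c) {y. f(c:=y) \<in> E} \<le> measure_pmf.prob (p c) {y. \<phi> c y = \<phi> c y0}"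
        by (rule measure_pmf.finite_measure_mono) simp
      also have "\<dots> \<le> \<rho>" using insert.prems(4) by auto
      finally show ?thesis using True by (simp add: prob_exp[symmetric] vimage_def)
    qed
  qed
  also have "\<dots> = \<rho> * measure_pmf.prob (Pi_pmf I' dflt p) E'" by simp
  also have "\<dots> \<le> \<rho> * \<rho> ^ card J"
  proof (rule mult_left_mono[OF _ insert.prems(5)])
    show "measure_pmf.prob (Pi_pmf I' dflt p) E' \<le> \<rho> ^ card J"
    proof (rule insert.IH)
      show "finite I'" by fact
      show "J \<subseteq> I'" using insert I'_def by auto
      show "\<forall>c\<in>J. \<phi> c (z c) = \<phi> c (z' c)" if zz: "z \<in> E'" "z' \<in> E'" "\<forall>c\<in>I' - J. z c = z' c" for z z'
      proof -
        obtain y y' where yy: "z(c:=y) \<in> E" "z'(c:=y') \<in> E" using zz(1,2) unfolding E'_def by blast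
        have "\<forall>c'\<in>I - insert c J. (z(c:=y)) c' = (z'(c:=y')) c'" using zz(3) by (auto simp: I'_def)
        then have "\<forall>c'\<in>insert c J. \<phi> c' ((z(c:=y)) c') = \<phi> c' ((z'(c:=y')) c')"
          using insert.prems(3)[OF yy] by blast
        then show ?thesis using insert.hyps(2) by (metis fun_upd_other insertCI)
      qed
      show "measure_pmf.prob (p c') {x. \<phi> c' x = v} \<le> \<rho>" if "c' \<in> J" for c' v
        using insert.prems(4) that by auto
      show "0 \<le> \<rho>" by fact
    qed
  qed
  also have "\<dots> = \<rho> ^ card (insert c J)" using insert.hyps by simp
  finally show ?case .
qed

lemma sep:
  fixes v \<epsilon> :: "nat \<Rightarrow> real"
  shows "(\<And>s. Suc s < L \<Longrightarrow> 2 * \<bar>v (Suc s)\<bar> \<le> \<bar>v s\<bar>) \<Longrightarrow> (\<And>s. s < L \<Longrightarrow> \<epsilon> s \<in> {-1,0,1}) \<Longrightarrow>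
    (\<exists>s<L. \<epsilon> s \<noteq> 0) \<Longrightarrow> \<bar>v (L-1)\<bar> \<le> \<bar>\<Sum>s<L. v s * \<epsilon> s\<bar>"
proof (induction L)
  case 0
  then show ?case by simp
next
  case (Suc L)
  have eL: "\<epsilon> L \<in> {-1,0,1}" using Suc.prems(2) by simp
  show ?case
  proof (cases "\<exists>s<L. \<epsilon> s \<noteq> 0")
    case True
    then have L0: "L > 0" by auto
    have ih: "\<bar>v (L-1)\<bar> \<le> \<bar>\<Sum>s<L. v s * \<epsilon> s\<bar>" using Suc.IH Suc.prems True by auto
    have r: "2 * \<bar>v L\<bar> \<le> \<bar>v (L-1)\<bar>" using Suc.prems(1)[of "L-1"] L0 by simp
    have "\<bar>v L * \<epsilon> L\<bar> \<le> \<bar>v L\<bar>" using eL by (auto simp: abs_mult)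
    then show ?thesis using ih r unfolding diff_Suc_1 sum.lessThan_Suc by (smt (verit))
  next
    case False
    then have "(\<Sum>s<L. v s * \<epsilon> s) = 0" by simp
    moreover have "\<epsilon> L \<noteq> 0" using False Suc.prems(3) less_Suc_eq by auto
    ultimately show ?thesis using eL by auto
  qed
qed



definition PX :: "(bool \<Rightarrow> (nat \<Rightarrow> bool) pmf) \<Rightarrow> nat \<Rightarrow> bool \<Rightarrow> (nat \<Rightarrow> nat \<Rightarrow> bool) pmf" where
  "PX D N b = Pi_pmf {..<N} (\<lambda>_. False) (\<lambda>_. D b)"
definition PZ :: "nat \<Rightarrow> nat \<Rightarrow> (nat \<times> nat \<Rightarrow> bool option) pmf" where
  "PZ k M = Pi_pmf ({..<k} \<times> {..<M}) None (\<lambda>_. noise_pmf k)"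
definition FF :: "nat \<Rightarrow> nat \<Rightarrow> (nat \<Rightarrow> nat) \<Rightarrow> (nat \<Rightarrow> nat \<Rightarrow> nat) \<Rightarrow> (nat \<Rightarrow> nat \<Rightarrow> bool) \<Rightarrow> (nat \<times> nat \<Rightarrow> bool option) \<Rightarrow> nat \<Rightarrow> nat \<Rightarrow> bool" where
  "FF k M vs \<pi> X Z = (\<lambda>v j.
           if v \<in> vs ` {..<k} \<and> j < M then
             (let i = inv_into {..<k} vs v in
               case Z (i, j) of None \<Rightarrow> X (\<pi> i j) i | Some c \<Rightarrow> c)
           else False)"
definition Yv :: "(nat \<Rightarrow> nat \<Rightarrow> nat) \<Rightarrow> (nat \<Rightarrow> nat \<Rightarrow> bool) \<Rightarrow> (nat \<times> nat \<Rightarrow> bool option) \<Rightarrow> nat \<Rightarrow> nat \<Rightarrow> bool" where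
  "Yv \<pi> X Z i j = (case Z (i, j) of None \<Rightarrow> X (\<pi> i j) i | Some c \<Rightarrow> c)"

lemma E_eq: "edge_dist k N M vs \<pi> D b = bind_pmf (PX D N b) (\<lambda>X. map_pmf (FF k M vs \<pi> X) (PZ k M))"
  unfolding edge_dist_def PX_def PZ_def FF_def by simp

lemma FY: "inj_on vs {..<k} \<Longrightarrow> i < k \<Longrightarrow> j < M \<Longrightarrow> FF k M vs \<pi> X Z (vs i) j = Yv \<pi> X Z i j"
  unfolding FF_def Yv_def by (simp add: inv_into_f_f)

lemma ip_Y: "inj_on vs {..<k} \<Longrightarrow> i < k \<Longrightarrow> ip M u (FF k M vs \<pi> X Z (vs i)) = (\<Sum>j<M. u j * of_bool (Yv \<pi> X Z i j))"
  unfolding ip_def by (intro sum.cong refl) (simp add: FY)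

lemma ip_bd: "\<bar>ip M u y\<bar> \<le> (\<Sum>j<M. \<bar>u j\<bar>)"
  unfolding ip_def by (rule order.trans[OF sum_abs]) (intro sum_mono, simp add: abs_mult)

lemma exp_E:
  fixes f :: "(nat \<Rightarrow> nat \<Rightarrow> bool) \<Rightarrow> real"
  assumes "\<And>y. \<bar>f y\<bar> \<le> B"
  shows "measure_pmf.expectation (edge_dist k N M vs \<pi> D b) f =
    measure_pmf.expectation (PX D N b) (\<lambda>X. measure_pmf.expectation (PZ k M) (\<lambda>Z. f (FF k M vs \<pi> X Z)))"
  unfolding E_eq by (subst exp_bind_pmf[OF assms]) simp

lemma noise_bool:
  assumes "k > 0"
  shows "measure_pmf.expectation (noise_pmf k) (\<lambda>z. of_bool (case z of None \<Rightarrow> x | Some c \<Rightarrow> c) :: real)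
      = (1 - 1/(real k)^2) * of_bool x + 1/(real k)^2/2"
  by (subst noise_exp[OF assms]) simp

lemma ET_Z:
  assumes k: "k > 0" and inj: "inj_on vs {..<k}" and r: "r < k"
  shows "measure_pmf.expectation (PZ k M) (\<lambda>Z. ip M a (FF k M vs \<pi> X Z (vs r))) =
     (\<Sum>j<M. a j * ((1 - 1/(real k)^2) * of_bool (X (\<pi> r j) r) + 1/(real k)^2/2))"
proof -
  have "measure_pmf.expectation (PZ k M) (\<lambda>Z. ip M a (FF k M vs \<pi> X Z (vs r))) =
      measure_pmf.expectation (PZ k M) (\<lambda>Z. \<Sum>j<M. a j * of_bool (Yv \<pi> X Z r j))"
    by (simp add: ip_Y[OF inj r])
  also have "\<dots> = (\<Sum>j<M. a j * measure_pmf.expectation (PZ k M) (\<lambda>Z. of_bool (Yv \<pi> X Z r j)))"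
    by (subst Bochner_Integration.integral_sum) (auto intro!: int_bdd[where B=1])
  also have "\<dots> = (\<Sum>j<M. a j * ((1 - 1/(real k)^2) * of_bool (X (\<pi> r j) r) + 1/(real k)^2/2))"
  proof (intro sum.cong refl)
    fix j assume j: "j \<in> {..<M}"
    have "measure_pmf.expectation (PZ k M) (\<lambda>Z. of_bool (Yv \<pi> X Z r j)) =
        measure_pmf.expectation (PZ k M) (\<lambda>Z. (\<lambda>z. of_bool (case z of None \<Rightarrow> X (\<pi> r j) r | Some c \<Rightarrow> c) :: real) (Z (r,j)))"
      by (simp add: Yv_def)
    also have "\<dots> = measure_pmf.expectation (noise_pmf k) (\<lambda>z. of_bool (case z of None \<Rightarrow> X (\<pi> r j) r | Some c \<Rightarrow> c))"
      unfolding PZ_def by (rule exp_component) (use j r in auto)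
    finally show "a j * measure_pmf.expectation (PZ k M) (\<lambda>Z. of_bool (Yv \<pi> X Z r j)) =
        a j * ((1 - 1/(real k)^2) * of_bool (X (\<pi> r j) r) + 1/(real k)^2/2)"
      by (simp add: noise_bool[OF k])
  qed
  finally show ?thesis .
qed

lemma ET:
  assumes k: "k > 0" and inj: "inj_on vs {..<k}" and r: "r < k" and \<pi>N: "\<forall>j<M. \<pi> r j < N"
  shows "measure_pmf.expectation (edge_dist k N M vs \<pi> D b) (\<lambda>y. ip M a (y (vs r))) =
     (\<Sum>j<M. a j * ((1 - 1/(real k)^2) * measure_pmf.expectation (D b) (\<lambda>x. of_bool (x r)) + 1/(real k)^2/2))"
proof -
  have "measure_pmf.expectation (edge_dist k N M vs \<pi> D b) (\<lambda>y. ip M a (y (vs r))) =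
     measure_pmf.expectation (PX D N b) (\<lambda>X. \<Sum>j<M. a j * ((1 - 1/(real k)^2) * of_bool (X (\<pi> r j) r) + 1/(real k)^2/2))"
    by (subst exp_E[OF ip_bd]) (simp add: ET_Z[OF k inj r])
  also have "\<dots> = (\<Sum>j<M. a j * ((1 - 1/(real k)^2) * measure_pmf.expectation (PX D N b) (\<lambda>X. of_bool (X (\<pi> r j) r)) + 1/(real k)^2/2))"
    by (subst Bochner_Integration.integral_sum)
       (auto intro!: int_bdd[where B=1] simp: algebra_simps Bochner_Integration.integral_add int_bdd[where B=1])
  also have "\<dots> = (\<Sum>j<M. a j * ((1 - 1/(real k)^2) * measure_pmf.expectation (D b) (\<lambda>x. of_bool (x r)) + 1/(real k)^2/2))"
  proof (intro sum.cong refl)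
    fix j assume "j \<in> {..<M}"
    then have "\<pi> r j \<in> {..<N}" using \<pi>N by auto
    then have "measure_pmf.expectation (PX D N b) (\<lambda>X. (\<lambda>x. of_bool (x r) :: real) (X (\<pi> r j))) = measure_pmf.expectation (D b) (\<lambda>x. of_bool (x r))"
      unfolding PX_def by (rule exp_component[rotated]) simp
    then show "a j * ((1 - 1/(real k)^2) * measure_pmf.expectation (PX D N b) (\<lambda>X. of_bool (X (\<pi> r j) r)) + 1/(real k)^2/2) =
       a j * ((1 - 1/(real k)^2) * measure_pmf.expectation (D b) (\<lambda>x. of_bool (x r)) + 1/(real k)^2/2)" by simp
  qed
  finally show ?thesis .
qed



lemma sq_le: "\<bar>x::real\<bar> \<le> y \<Longrightarrow> x\<^sup>2 \<le> y\<^sup>2"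
  using power_mono[of "\<bar>x\<bar>" y 2] by simp

lemma exp_abs_le:
  fixes f :: "'a \<Rightarrow> real"
  assumes "\<And>x. \<bar>f x\<bar> \<le> B"
  shows "\<bar>measure_pmf.expectation p f\<bar> \<le> B"
proof -
  have "\<bar>measure_pmf.expectation p f\<bar> \<le> measure_pmf.expectation p (\<lambda>x. \<bar>f x\<bar>)"
    using integral_norm_bound[of p f] by simp
  also have "\<dots> \<le> measure_pmf.expectation p (\<lambda>x. B)"
    by (rule integral_mono) (use assms in \<open>auto intro!: int_bdd[where B=B]\<close>)
  finally show ?thesis by simp
qed

lemma cs_group:
  fixes a :: "nat \<Rightarrow> real"
  assumes S: "finite S" and T: "finite T" and gST: "g ` S \<subseteq> T" and c: "\<And>l. l \<in> T \<Longrightarrow> card {j\<in>S. g j = l} \<le> d"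
  shows "(\<Sum>l\<in>T. (\<Sum>j\<in>{j\<in>S. g j = l}. a j)\<^sup>2) \<le> real d * (\<Sum>j\<in>S. (a j)\<^sup>2)"
proof -
  have "(\<Sum>l\<in>T. (\<Sum>j\<in>{j\<in>S. g j = l}. a j)\<^sup>2) \<le> (\<Sum>l\<in>T. real d * (\<Sum>j\<in>{j\<in>S. g j = l}. (a j)\<^sup>2))"
  proof (rule sum_mono)
    fix l assume l: "l \<in> T"
    have "(\<Sum>j\<in>{j\<in>S. g j = l}. a j)\<^sup>2 = (\<Sum>j\<in>{j\<in>S. g j = l}. a j * 1)\<^sup>2" by simp
    also have "\<dots> \<le> (\<Sum>j\<in>{j\<in>S. g j = l}. (a j)\<^sup>2) * (\<Sum>j\<in>{j\<in>S. g j = l}. 1\<^sup>2)"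
      by (rule Cauchy_Schwarz_ineq_sum)
    also have "\<dots> = (\<Sum>j\<in>{j\<in>S. g j = l}. (a j)\<^sup>2) * real (card {j\<in>S. g j = l})" by simp
    also have "\<dots> \<le> (\<Sum>j\<in>{j\<in>S. g j = l}. (a j)\<^sup>2) * real d"
      by (rule mult_left_mono) (use c[OF l] in \<open>auto intro: sum_nonneg\<close>)
    finally show "(\<Sum>j\<in>{j\<in>S. g j = l}. a j)\<^sup>2 \<le> real d * (\<Sum>j\<in>{j\<in>S. g j = l}. (a j)\<^sup>2)" by (simp add: mult.commute)
  qed
  also have "\<dots> = real d * (\<Sum>j\<in>S. (a j)\<^sup>2)"
    by (simp add: sum_distrib_left[symmetric] sum.group[OF S T gST])
  finally show ?thesis .
qed

lemma exp_bool01: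
  fixes P :: "'a \<Rightarrow> bool"
  shows "0 \<le> measure_pmf.expectation p (\<lambda>x. of_bool (P x) :: real) \<and> measure_pmf.expectation p (\<lambda>x. of_bool (P x) :: real) \<le> 1"
proof -
  have ii: "(\<lambda>x. of_bool (P x) :: real) = indicator {x. P x}" by (auto simp: fun_eq_iff indicator_def)
  have "measure_pmf.expectation p (\<lambda>x. of_bool (P x) :: real) = measure_pmf.prob p {x. P x}"
    by (simp only: ii prob_exp)
  then show ?thesis by (simp add: measure_pmf.prob_le_1)
qed

lemma cart_r:
  fixes G :: "nat \<Rightarrow> real" and k M r :: nat
  assumes "r < k"
  shows "(\<Sum>c\<in>{..<k} \<times> {..<M}. if fst c = r then G (snd c) else 0) = (\<Sum>j<M. G j)"
proof -
  have "(\<Sum>c\<in>{..<k} \<times> {..<M}. if fst c = r then G (snd c) else 0) = (\<Sum>i<k. \<Sum>j<M. if i = r then G j else 0)"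
    by (subst sum.cartesian_product) (simp add: case_prod_beta)
  also have "\<dots> = (\<Sum>i<k. if i = r then (\<Sum>j<M. G j) else 0)" by (intro sum.cong refl) auto
  also have "\<dots> = (\<Sum>j<M. G j)" using assms by (subst sum.delta) auto
  finally show ?thesis .
qed

lemma var_T:
  fixes a :: "nat \<Rightarrow> real"
  assumes k: "k > 0" and inj: "inj_on vs {..<k}" and r: "r < k" and \<pi>N: "\<forall>j<M. \<pi> r j < N"
    and cd: "\<forall>l<N. card {j\<in>{..<M}. \<pi> r j = l} \<le> d"
    and mom: "\<And>b. measure_pmf.expectation (D b) (\<lambda>x. of_bool (x r)) = p0"
  defines "q \<equiv> 1/(real k)^2"
  defines "\<mu> \<equiv> (\<Sum>j<M. a j * ((1 - q) * p0 + q/2))"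
  shows "measure_pmf.expectation (edge_dist k N M vs \<pi> D b) (\<lambda>y. (ip M a (y (vs r)) - \<mu>)\<^sup>2)
           \<le> (2 + 2 * real d) * (\<Sum>j<M. (a j)\<^sup>2)"
proof -
  define Sa where "Sa = (\<Sum>j<M. (a j)\<^sup>2)"
  define Ba where "Ba = (\<Sum>j<M. \<bar>a j\<bar>)"
  have Ba0: "0 \<le> Ba" unfolding Ba_def by (auto intro: sum_nonneg)
  have aBa: "\<bar>a j\<bar> \<le> Ba" if "j < M" for j unfolding Ba_def by (rule member_le_sum) (use that in auto)
  have q01: "0 \<le> q" "q \<le> 1" using k by (auto simp: q_def field_simps)
  have p01: "0 \<le> p0" "p0 \<le> 1" using exp_bool01[of "D False" "\<lambda>x. x r"] mom[of False] by auto
  define e where "e X j = (1 - q) * of_bool (X (\<pi> r j) r) + q/2" for X :: "nat \<Rightarrow> nat \<Rightarrow> bool" and j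
  have e01: "0 \<le> e X j" "e X j \<le> 1" for X j using q01 by (auto simp: e_def)
  define mX where "mX X = (\<Sum>j<M. a j * e X j)" for X
  have inner: "measure_pmf.expectation (PZ k M) (\<lambda>Z. (ip M a (FF k M vs \<pi> X Z (vs r)) - mX X)\<^sup>2) \<le> Sa" for X
  proof -
    define f where "f c z = (if fst c = r then a (snd c) * (of_bool (case z of None \<Rightarrow> X (\<pi> r (snd c)) r | Some b \<Rightarrow> b) - e X (snd c)) else 0)"
      for c :: "nat \<times> nat" and z :: "bool option"
    have eqZ: "ip M a (FF k M vs \<pi> X Z (vs r)) - mX X = (\<Sum>c\<in>{..<k} \<times> {..<M}. f c (Z c))" for Z
    proof -
      have "(\<Sum>c\<in>{..<k} \<times> {..<M}. f c (Z c)) = (\<Sum>c\<in>{..<k} \<times> {..<M}. if fst c = r then a (snd c) * (of_bool (Yv \<pi> X Z r (snd c)) - e X (snd c)) else 0)"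
        by (intro sum.cong refl) (auto simp: f_def Yv_def split: prod.splits)
      also have "\<dots> = (\<Sum>j<M. a j * (of_bool (Yv \<pi> X Z r j) - e X j))"
        by (rule cart_r[OF r])
      also have "\<dots> = ip M a (FF k M vs \<pi> X Z (vs r)) - mX X"
        by (simp add: ip_Y[OF inj r] mX_def right_diff_distrib sum_subtractf)
      finally show ?thesis by simp
    qed
    have fb: "\<bar>f c z\<bar> \<le> Ba" if "c \<in> {..<k} \<times> {..<M}" for c z
    proof -
      have "\<bar>of_bool (case z of None \<Rightarrow> X (\<pi> r (snd c)) r | Some b \<Rightarrow> b) - e X (snd c)\<bar> \<le> 1"
        using e01[of X "snd c"] by (auto simp: of_bool_def split: option.splits if_splits)
      then have "\<bar>a (snd c) * (of_bool (case z of None \<Rightarrow> X (\<pi> r (snd c)) r | Some b \<Rightarrow> b) - e X (snd c))\<bar> \<le> \<bar>a (snd c)\<bar>"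
        by (simp add: abs_mult mult_left_le)
      then show ?thesis using aBa[of "snd c"] that Ba0 unfolding f_def by auto
    qed
    have f2: "(f c z)\<^sup>2 \<le> (if fst c = r then (a (snd c))\<^sup>2 else 0)" for c z
    proof -
      have "\<bar>of_bool (case z of None \<Rightarrow> X (\<pi> r (snd c)) r | Some b \<Rightarrow> b) - e X (snd c)\<bar> \<le> 1"
        using e01[of X "snd c"] by (auto simp: of_bool_def split: option.splits if_splits)
      then have "(of_bool (case z of None \<Rightarrow> X (\<pi> r (snd c)) r | Some b \<Rightarrow> b) - e X (snd c))\<^sup>2 \<le> 1"
        by (simp only: abs_square_le_1)
      then show ?thesis unfolding f_def by (simp add: power_mult_distrib mult_left_le)
    qed
    have m0: "measure_pmf.expectation (noise_pmf k) (f c) = 0" for c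
      unfolding noise_exp[OF k] q_def[symmetric] by (simp add: f_def e_def algebra_simps) (simp add: field_simps)
    have "measure_pmf.expectation (PZ k M) (\<lambda>Z. (ip M a (FF k M vs \<pi> X Z (vs r)) - mX X)\<^sup>2)
        = measure_pmf.expectation (PZ k M) (\<lambda>Z. (\<Sum>c\<in>{..<k} \<times> {..<M}. f c (Z c))\<^sup>2)"
      by (simp add: eqZ)
    also have "\<dots> = (\<Sum>c\<in>{..<k} \<times> {..<M}. measure_pmf.expectation (noise_pmf k) (\<lambda>z. (f c z)\<^sup>2))"
      unfolding PZ_def by (rule pi_var[where B=Ba]) (use fb m0 in auto)
    also have "\<dots> \<le> (\<Sum>c\<in>{..<k} \<times> {..<M}. if fst c = r then (a (snd c))\<^sup>2 else 0)"
    proof (rule sum_mono)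
      fix c
      have "measure_pmf.expectation (noise_pmf k) (\<lambda>z. (f c z)\<^sup>2) \<le> measure_pmf.expectation (noise_pmf k) (\<lambda>z. if fst c = r then (a (snd c))\<^sup>2 else 0)"
      proof (rule integral_mono)
        show "integrable (measure_pmf (noise_pmf k)) (\<lambda>z. (f c z)\<^sup>2)"
          by (rule int_bdd[where B="(a (snd c))\<^sup>2"]) (use f2[of c] in \<open>simp split: if_splits; smt (verit) zero_le_power2\<close>)
      qed (auto simp: f2)
      then show "measure_pmf.expectation (noise_pmf k) (\<lambda>z. (f c z)\<^sup>2) \<le> (if fst c = r then (a (snd c))\<^sup>2 else 0)"
        by simp
    qed
    also have "\<dots> = Sa" unfolding Sa_def by (rule cart_r[OF r])
    finally show ?thesis .
  qed
  define S where "S l = {j\<in>{..<M}. \<pi> r j = l}" for l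
  define c where "c l = (\<Sum>j\<in>S l. a j)" for l
  define f' where "f' l x = (1 - q) * c l * (of_bool (x r) - p0)" for l and x :: "nat \<Rightarrow> bool"
  have gST: "\<pi> r ` {..<M} \<subseteq> {..<N}" using \<pi>N by auto
  have eqX: "mX X - \<mu> = (\<Sum>l\<in>{..<N}. f' l (X l))" for X
  proof -
    have "mX X - \<mu> = (\<Sum>j<M. (1 - q) * (of_bool (X (\<pi> r j) r) - p0) * a j)"
      unfolding mX_def \<mu>_def e_def by (simp only: sum_subtractf[symmetric]) (intro sum.cong refl; simp add: algebra_simps)
    also have "\<dots> = (\<Sum>l\<in>{..<N}. \<Sum>j\<in>S l. (1 - q) * (of_bool (X (\<pi> r j) r) - p0) * a j)"
      unfolding S_def by (rule sum.group[OF _ _ gST, symmetric]) auto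
    also have "\<dots> = (\<Sum>l\<in>{..<N}. f' l (X l))"
    proof (intro sum.cong refl)
      fix l
      have "(\<Sum>j\<in>S l. (1 - q) * (of_bool (X (\<pi> r j) r) - p0) * a j) = (\<Sum>j\<in>S l. (1 - q) * (of_bool (X l r) - p0) * a j)"
        by (intro sum.cong refl) (auto simp: S_def)
      also have "\<dots> = f' l (X l)" unfolding f'_def c_def sum_distrib_left sum_distrib_right
        by (intro sum.cong refl) (simp add: algebra_simps)
      finally show "(\<Sum>j\<in>S l. (1 - q) * (of_bool (X (\<pi> r j) r) - p0) * a j) = f' l (X l)" .
    qed
    finally show ?thesis .
  qed
  have cBa: "\<bar>c l\<bar> \<le> Ba" for l
  proof -
    have "\<bar>c l\<bar> \<le> (\<Sum>j\<in>S l. \<bar>a j\<bar>)" unfolding c_def by (rule sum_abs)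
    also have "\<dots> \<le> Ba" unfolding Ba_def by (rule sum_mono2) (auto simp: S_def)
    finally show ?thesis .
  qed
  have op1: "\<bar>of_bool b - p0\<bar> \<le> 1" for b using p01 by (cases b) auto
  have f'b: "\<bar>f' l x\<bar> \<le> Ba" for l x
  proof -
    have "\<bar>f' l x\<bar> = \<bar>1 - q\<bar> * \<bar>c l\<bar> * \<bar>of_bool (x r) - p0\<bar>" by (simp add: f'_def abs_mult)
    also have "\<dots> \<le> 1 * Ba * 1"
      by (intro mult_mono) (use q01 cBa op1 Ba0 in auto)
    finally show ?thesis by simp
  qed
  have bX: "\<bar>(mX X - \<mu>)\<^sup>2\<bar> \<le> (real N * Ba)\<^sup>2" for X
  proof -
    have "\<bar>mX X - \<mu>\<bar> \<le> (\<Sum>l\<in>{..<N}. \<bar>f' l (X l)\<bar>)"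
      using eqX[of X] sum_abs[of "\<lambda>l. f' l (X l)" "{..<N}"] by simp
    also have "\<dots> \<le> (\<Sum>l\<in>{..<N}. Ba)" by (rule sum_mono) (rule f'b)
    finally show ?thesis by simp (intro sq_le, simp)
  qed
  have b1: "\<bar>(ip M a (FF k M vs \<pi> X Z (vs r)) - mX X)\<^sup>2\<bar> \<le> (Ba + \<bar>mX X\<bar>)\<^sup>2" for X Z
  proof -
    have "\<bar>ip M a (FF k M vs \<pi> X Z (vs r)) - mX X\<bar> \<le> Ba + \<bar>mX X\<bar>"
      using ip_bd[of M a "FF k M vs \<pi> X Z (vs r)"] unfolding Ba_def by linarith
    then show ?thesis by (simp add: sq_le)
  qed
  have f'2: "(f' l x)\<^sup>2 \<le> (c l)\<^sup>2" for l x
  proof -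
    have "\<bar>f' l x\<bar> \<le> \<bar>c l\<bar>"
    proof -
      have "\<bar>f' l x\<bar> = \<bar>1 - q\<bar> * \<bar>c l\<bar> * \<bar>of_bool (x r) - p0\<bar>" by (simp add: f'_def abs_mult)
      also have "\<dots> \<le> 1 * \<bar>c l\<bar> * 1"
        by (intro mult_mono) (use q01 op1 in auto)
      finally show ?thesis by simp
    qed
    then show ?thesis by (simp add: abs_le_square_iff[symmetric])
  qed
  have m0': "measure_pmf.expectation (D b) (f' l) = 0" for l
  proof -
    have "measure_pmf.expectation (D b) (f' l) = (1 - q) * c l * (measure_pmf.expectation (D b) (\<lambda>x. of_bool (x r)) - p0)"
      unfolding f'_def
    proof -
      have "measure_pmf.expectation (D b) (\<lambda>x. (1 - q) * c l * (of_bool (x r) - p0)) = (1 - q) * c l * measure_pmf.expectation (D b) (\<lambda>x. of_bool (x r) - p0)"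
        by (rule Bochner_Integration.integral_mult_right_zero)
      also have "measure_pmf.expectation (D b) (\<lambda>x. of_bool (x r) - p0) = measure_pmf.expectation (D b) (\<lambda>x. of_bool (x r)) - p0"
        by (subst Bochner_Integration.integral_diff) (auto intro!: int_bdd[where B=1])
      finally show "measure_pmf.expectation (D b) (\<lambda>x. (1 - q) * c l * (of_bool (x r) - p0)) = (1 - q) * c l * (measure_pmf.expectation (D b) (\<lambda>x. of_bool (x r)) - p0)" .
    qed
    then show ?thesis by (simp add: mom)
  qed
  have outer: "measure_pmf.expectation (PX D N b) (\<lambda>X. (mX X - \<mu>)\<^sup>2) \<le> real d * Sa"
  proof -
    have "measure_pmf.expectation (PX D N b) (\<lambda>X. (mX X - \<mu>)\<^sup>2) = measure_pmf.expectation (PX D N b) (\<lambda>X. (\<Sum>l\<in>{..<N}. f' l (X l))\<^sup>2)"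
      by (simp add: eqX)
    also have "\<dots> = (\<Sum>l\<in>{..<N}. measure_pmf.expectation (D b) (\<lambda>x. (f' l x)\<^sup>2))"
      unfolding PX_def by (rule pi_var[where B=Ba]) (use f'b m0' in auto)
    also have "\<dots> \<le> (\<Sum>l\<in>{..<N}. (c l)\<^sup>2)"
    proof (rule sum_mono)
      fix l
      have "measure_pmf.expectation (D b) (\<lambda>x. (f' l x)\<^sup>2) \<le> measure_pmf.expectation (D b) (\<lambda>x. (c l)\<^sup>2)"
        by (rule integral_mono) (auto intro!: int_bdd[where B="Ba^2"] sq_le f'b simp: f'2)
      then show "measure_pmf.expectation (D b) (\<lambda>x. (f' l x)\<^sup>2) \<le> (c l)\<^sup>2" by simp
    qed
    also have "\<dots> \<le> real d * Sa"
      unfolding c_def S_def Sa_def by (rule cs_group[OF _ _ gST]) (use cd in auto)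
    finally show ?thesis .
  qed
  have bdT: "\<bar>(ip M a y - \<mu>)\<^sup>2\<bar> \<le> (Ba + \<bar>\<mu>\<bar>)\<^sup>2" for y
  proof -
    have "\<bar>ip M a y - \<mu>\<bar> \<le> Ba + \<bar>\<mu>\<bar>" using ip_bd[of M a y] unfolding Ba_def by linarith
    then show ?thesis by (simp add: abs_le_square_iff[symmetric])
  qed
  have "measure_pmf.expectation (edge_dist k N M vs \<pi> D b) (\<lambda>y. (ip M a (y (vs r)) - \<mu>)\<^sup>2) =
     measure_pmf.expectation (PX D N b) (\<lambda>X. measure_pmf.expectation (PZ k M) (\<lambda>Z. (ip M a (FF k M vs \<pi> X Z (vs r)) - \<mu>)\<^sup>2))"
    by (rule exp_E) (rule bdT)
  also have "\<dots> \<le> measure_pmf.expectation (PX D N b) (\<lambda>X. 2 * Sa + 2 * (mX X - \<mu>)\<^sup>2)"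
  proof (rule integral_mono)
    show "integrable (measure_pmf (PX D N b)) (\<lambda>X. measure_pmf.expectation (PZ k M) (\<lambda>Z. (ip M a (FF k M vs \<pi> X Z (vs r)) - \<mu>)\<^sup>2))"
    proof (rule int_bdd[where B="(Ba + \<bar>\<mu>\<bar>)\<^sup>2"])
      fix X
      show "\<bar>measure_pmf.expectation (PZ k M) (\<lambda>Z. (ip M a (FF k M vs \<pi> X Z (vs r)) - \<mu>)\<^sup>2)\<bar> \<le> (Ba + \<bar>\<mu>\<bar>)\<^sup>2" by (rule exp_abs_le) (rule bdT)
    qed
    show "integrable (measure_pmf (PX D N b)) (\<lambda>X. 2 * Sa + 2 * (mX X - \<mu>)\<^sup>2)"
    proof (rule int_bdd[where B="2 * Sa + 2 * (real N * Ba)\<^sup>2"])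
      fix X
      have "\<bar>mX X - \<mu>\<bar> \<le> (\<Sum>l\<in>{..<N}. \<bar>f' l (X l)\<bar>)"
        using eqX[of X] sum_abs[of "\<lambda>l. f' l (X l)" "{..<N}"] by simp
      also have "\<dots> \<le> (\<Sum>l\<in>{..<N}. Ba)" by (rule sum_mono) (rule f'b)
      finally have "(mX X - \<mu>)\<^sup>2 \<le> (real N * Ba)\<^sup>2" by (intro sq_le) simp
      moreover have "0 \<le> Sa" unfolding Sa_def by (auto intro: sum_nonneg)
      ultimately show "\<bar>2 * Sa + 2 * (mX X - \<mu>)\<^sup>2\<bar> \<le> 2 * Sa + 2 * (real N * Ba)\<^sup>2" by simp
    qed
    fix X
    have pt: "(ip M a (FF k M vs \<pi> X Z (vs r)) - \<mu>)\<^sup>2 \<le> 2 * (ip M a (FF k M vs \<pi> X Z (vs r)) - mX X)\<^sup>2 + 2 * (mX X - \<mu>)\<^sup>2" for Z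
    proof -
      have "(u + v)\<^sup>2 \<le> 2 * u\<^sup>2 + 2 * v\<^sup>2" for u v :: real
      proof -
        have "0 \<le> (u - v)\<^sup>2" by simp
        then show ?thesis unfolding power2_sum power2_diff by linarith
      qed
      from this[of "ip M a (FF k M vs \<pi> X Z (vs r)) - mX X" "mX X - \<mu>"] show ?thesis by simp
    qed
    have "measure_pmf.expectation (PZ k M) (\<lambda>Z. (ip M a (FF k M vs \<pi> X Z (vs r)) - \<mu>)\<^sup>2) \<le>
        measure_pmf.expectation (PZ k M) (\<lambda>Z. 2 * (ip M a (FF k M vs \<pi> X Z (vs r)) - mX X)\<^sup>2 + 2 * (mX X - \<mu>)\<^sup>2)"
    proof (rule integral_mono)
      show "integrable (measure_pmf (PZ k M)) (\<lambda>Z. (ip M a (FF k M vs \<pi> X Z (vs r)) - \<mu>)\<^sup>2)"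
        by (rule int_bdd) (rule bdT)
      show "integrable (measure_pmf (PZ k M)) (\<lambda>Z. 2 * (ip M a (FF k M vs \<pi> X Z (vs r)) - mX X)\<^sup>2 + 2 * (mX X - \<mu>)\<^sup>2)"
        by (intro Bochner_Integration.integrable_add integrable_mult_right int_bdd[OF b1] measure_pmf.integrable_const)
    qed (rule pt)
    also have "\<dots> = 2 * measure_pmf.expectation (PZ k M) (\<lambda>Z. (ip M a (FF k M vs \<pi> X Z (vs r)) - mX X)\<^sup>2) + 2 * (mX X - \<mu>)\<^sup>2"
      by (subst Bochner_Integration.integral_add)
         (auto intro!: integrable_mult_right int_bdd[OF b1] measure_pmf.integrable_const simp del: power2_abs)
    also have "\<dots> \<le> 2 * Sa + 2 * (mX X - \<mu>)\<^sup>2" using inner[of X] by simp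
    finally show "measure_pmf.expectation (PZ k M) (\<lambda>Z. (ip M a (FF k M vs \<pi> X Z (vs r)) - \<mu>)\<^sup>2) \<le> 2 * Sa + 2 * (mX X - \<mu>)\<^sup>2" .
  qed
  also have "\<dots> = 2 * Sa + 2 * measure_pmf.expectation (PX D N b) (\<lambda>X. (mX X - \<mu>)\<^sup>2)"
  proof -
    show ?thesis
      by (subst Bochner_Integration.integral_add) (auto intro!: integrable_mult_right int_bdd[where B="(real N * Ba)\<^sup>2"] bX simp del: power2_abs)
  qed
  also have "\<dots> \<le> 2 * Sa + 2 * (real d * Sa)" using outer by simp
  finally show ?thesis by (simp add: Sa_def algebra_simps)
qed



lemma exp_of_bool: "measure_pmf.expectation p (\<lambda>x. of_bool (P x) :: real) = measure_pmf.prob p {x. P x}"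
proof -
  have ii: "(\<lambda>x. of_bool (P x) :: real) = indicator {x. P x}" by (auto simp: fun_eq_iff indicator_def)
  show ?thesis by (simp only: ii prob_exp)
qed

lemma noise_point:
  assumes k: "k > 0"
  shows "measure_pmf.prob (noise_pmf k) {x. (case x of None \<Rightarrow> x0 | Some b \<Rightarrow> b) = v} \<le> 1 - 1/(real k)^2/2"
proof -
  have q: "0 \<le> 1/(real k)^2" "1/(real k)^2 \<le> 1" using k by (auto simp: field_simps)
  have "measure_pmf.prob (noise_pmf k) {x. (case x of None \<Rightarrow> x0 | Some b \<Rightarrow> b) = v} =
     measure_pmf.expectation (noise_pmf k) (indicator {x. (case x of None \<Rightarrow> x0 | Some b \<Rightarrow> b) = v})"
    by (rule prob_exp)
  also have "\<dots> = (1 - 1/(real k)^2) * of_bool (x0 = v) + 1/(real k)^2/2"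
    by (subst noise_exp[OF k]) (cases v; simp add: indicator_def)
  also have "\<dots> \<le> 1 - 1/(real k)^2/2" using q by (cases "x0 = v") auto
  finally show ?thesis .
qed

lemma anti:
  fixes wt :: "nat \<Rightarrow> nat \<Rightarrow> real"
  assumes k: "k > 0" and inj: "inj_on vs {..<k}" and r: "r < k"
    and g: "\<And>s. s < L \<Longrightarrow> g s < M" and ginj: "inj_on g {..<L}"
    and ratio: "\<And>s. Suc s < L \<Longrightarrow> 2 * \<bar>wt r (g (Suc s))\<bar> \<le> \<bar>wt r (g s)\<bar>"
    and last: "2 * \<delta> \<le> \<bar>wt r (g (L - 1))\<bar>"
  shows "measure_pmf.prob (edge_dist k N M vs \<pi> D b) {y. \<bar>(\<Sum>i<k. ip M (wt i) (y (vs i))) - \<theta>t\<bar> < \<delta>}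
          \<le> (1 - 1/(real k)^2/2) ^ L"
proof -
  define \<rho> where "\<rho> = 1 - 1/(real k)^2/2"
  have "1 \<le> real k" using k by simp
  then have "1 \<le> (real k)^2" by (simp add: one_le_power)
  then have \<rho>0: "0 \<le> \<rho>" unfolding \<rho>_def by (simp add: divide_le_eq)
  define A where "A y = (\<Sum>i<k. ip M (wt i) (y (vs i))) - \<theta>t" for y
  define I where "I = {..<k} \<times> {..<M}"
  define J where "J = (\<lambda>s. (r, g s)) ` {..<L}"
  have injJ: "inj_on (\<lambda>s. (r, g s)) {..<L}" using ginj by (auto simp: inj_on_def)
  have cJ: "card J = L" unfolding J_def using card_image[OF injJ] by simp
  have JI: "J \<subseteq> I" using g r by (auto simp: J_def I_def)
  have finI: "finite I" by (simp add: I_def)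
  have perX: "measure_pmf.prob (PZ k M) {Z. \<bar>A (FF k M vs \<pi> X Z)\<bar> < \<delta>} \<le> \<rho> ^ L" for X
  proof -
    define \<phi> where "\<phi> c z = (case z of None \<Rightarrow> X (\<pi> r (snd c)) r | Some b \<Rightarrow> b)" for c :: "nat \<times> nat" and z
    define Ev where "Ev = {Z. \<bar>A (FF k M vs \<pi> X Z)\<bar> < \<delta>}"
    have AY: "A (FF k M vs \<pi> X Z) = (\<Sum>i<k. \<Sum>j<M. wt i j * of_bool (Yv \<pi> X Z i j)) - \<theta>t" for Z
      unfolding A_def by (simp add: ip_Y[OF inj])
    have diff: "A (FF k M vs \<pi> X Z) - A (FF k M vs \<pi> X Z') =
        (\<Sum>s<L. wt r (g s) * (of_bool (\<phi> (r, g s) (Z (r, g s))) - of_bool (\<phi> (r, g s) (Z' (r, g s)))))"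
      if ag: "\<forall>c\<in>I - J. Z c = Z' c" for Z Z'
    proof -
      define Dc where "Dc c = wt (fst c) (snd c) * (of_bool (Yv \<pi> X Z (fst c) (snd c)) - of_bool (Yv \<pi> X Z' (fst c) (snd c)))" for c
      have "A (FF k M vs \<pi> X Z) - A (FF k M vs \<pi> X Z') = (\<Sum>i<k. \<Sum>j<M. Dc (i, j))"
      proof -
        have "(\<Sum>i<k. \<Sum>j<M. Dc (i, j)) = (\<Sum>i<k. \<Sum>j<M. wt i j * of_bool (Yv \<pi> X Z i j)) - (\<Sum>i<k. \<Sum>j<M. wt i j * of_bool (Yv \<pi> X Z' i j))"
          unfolding Dc_def by (simp only: right_diff_distrib sum_subtractf fst_conv snd_conv)
        then show ?thesis unfolding AY by linarith
      qed
      also have "\<dots> = (\<Sum>c\<in>I. Dc c)" unfolding I_def by (subst sum.cartesian_product) (simp add: case_prod_beta)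
      also have "\<dots> = (\<Sum>c\<in>J. Dc c)"
      proof (rule sum.mono_neutral_right[OF finI JI])
        show "\<forall>c\<in>I - J. Dc c = 0" using ag by (auto simp: Dc_def Yv_def)
      qed
      also have "\<dots> = (\<Sum>s<L. Dc (r, g s))" unfolding J_def by (subst sum.reindex[OF injJ]) simp
      also have "\<dots> = (\<Sum>s<L. wt r (g s) * (of_bool (\<phi> (r, g s) (Z (r, g s))) - of_bool (\<phi> (r, g s) (Z' (r, g s)))))"
        by (intro sum.cong refl) (unfold Dc_def Yv_def \<phi>_def fst_conv snd_conv, rule refl)
      finally show ?thesis .
    qed
    have "measure_pmf.prob (Pi_pmf I None (\<lambda>_. noise_pmf k)) Ev \<le> \<rho> ^ card J"
    proof (rule AC[where \<phi>=\<phi>])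
      show "finite J" unfolding J_def by simp
      show "finite I" by (rule finI)
      show "J \<subseteq> I" by (rule JI)
      show "0 \<le> \<rho>" by (rule \<rho>0)
      show "measure_pmf.prob (noise_pmf k) {x. \<phi> c x = v} \<le> \<rho>" for c v
        unfolding \<phi>_def \<rho>_def by (rule noise_point[OF k])
      show "\<forall>c\<in>J. \<phi> c (z c) = \<phi> c (z' c)" if zE: "z \<in> Ev" "z' \<in> Ev" and ag: "\<forall>c\<in>I - J. z c = z' c" for z z'
      proof (rule ccontr)
        assume "\<not> (\<forall>c\<in>J. \<phi> c (z c) = \<phi> c (z' c))"
        then obtain s where s: "s < L" "\<phi> (r, g s) (z (r, g s)) \<noteq> \<phi> (r, g s) (z' (r, g s))"
          unfolding J_def by auto
        define \<epsilon> where "\<epsilon> s = (of_bool (\<phi> (r, g s) (z (r, g s))) - of_bool (\<phi> (r, g s) (z' (r, g s))) :: real)" for s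
        have "\<bar>wt r (g (L - 1))\<bar> \<le> \<bar>\<Sum>s<L. wt r (g s) * \<epsilon> s\<bar>"
        proof (rule sep)
          show "2 * \<bar>wt r (g (Suc s))\<bar> \<le> \<bar>wt r (g s)\<bar>" if "Suc s < L" for s using ratio that by simp
          show "\<epsilon> s \<in> {-1,0,1}" for s by (auto simp: \<epsilon>_def)
          show "\<exists>s<L. \<epsilon> s \<noteq> 0" using s by (intro exI[of _ s]) (auto simp: \<epsilon>_def)
        qed
        also have "\<dots> = \<bar>A (FF k M vs \<pi> X z) - A (FF k M vs \<pi> X z')\<bar>" using diff[OF ag] by (simp add: \<epsilon>_def)
        also have "\<dots> < 2 * \<delta>" using zE by (auto simp: Ev_def)
        finally show False using last by simp
      qed
    qed
    then show ?thesis unfolding cJ Ev_def PZ_def I_def \<rho>_def by simp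
  qed
  have "measure_pmf.prob (edge_dist k N M vs \<pi> D b) {y. \<bar>A y\<bar> < \<delta>} =
     measure_pmf.expectation (edge_dist k N M vs \<pi> D b) (indicator {y. \<bar>A y\<bar> < \<delta>})"
    by (rule prob_exp)
  also have "\<dots> = measure_pmf.expectation (PX D N b) (\<lambda>X. measure_pmf.expectation (PZ k M) (\<lambda>Z. indicator {y. \<bar>A y\<bar> < \<delta>} (FF k M vs \<pi> X Z)))"
    by (rule exp_E[where B=1]) (simp add: indicator_def)
  also have "\<dots> = measure_pmf.expectation (PX D N b) (\<lambda>X. measure_pmf.prob (PZ k M) {Z. \<bar>A (FF k M vs \<pi> X Z)\<bar> < \<delta>})"
    by (simp add: indicator_def exp_of_bool)
  also have "\<dots> \<le> measure_pmf.expectation (PX D N b) (\<lambda>X. \<rho> ^ L)"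
    by (rule integral_mono) (auto intro!: int_bdd[where B=1] perX simp: measure_pmf.prob_le_1)
  also have "\<dots> = \<rho> ^ L" by simp
  finally show ?thesis unfolding A_def \<rho>_def .
qed



lemma sgn_diff:
  fixes A t \<delta> :: real
  assumes \<delta>0: "0 < \<delta>"
  shows "\<bar>sgn01 A - sgn01 (A + t)\<bar> \<le> t\<^sup>2 / \<delta>\<^sup>2 + of_bool (\<bar>A\<bar> < \<delta>)"
proof -
  have t2: "0 \<le> t\<^sup>2 / \<delta>\<^sup>2" by simp
  have s1: "\<bar>sgn01 x - sgn01 y\<bar> \<le> 1" for x y by (simp add: sgn01_def)
  show ?thesis
  proof (cases "\<bar>A\<bar> < \<delta>")
    case True
    then have "of_bool (\<bar>A\<bar> < \<delta>) = (1::real)" by simp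
    then show ?thesis using t2 s1[of A "A+t"] by linarith
  next
    case False
    show ?thesis
    proof (cases "sgn01 A = sgn01 (A + t)")
      case True then show ?thesis using t2 by simp
    next
      case ne: False
      then have "\<delta> \<le> \<bar>t\<bar>" using False by (auto simp: sgn01_def split: if_splits)
      moreover have "0 \<le> \<delta> \<or> \<delta> < 0" by auto
      ultimately have "1 \<le> t\<^sup>2 / \<delta>\<^sup>2 \<or> \<delta> \<le> 0"
        by (auto simp: divide_simps) (metis abs_le_square_iff abs_of_nonneg abs_ge_zero order.trans power2_abs)
      then show ?thesis using False ne t2 \<delta>0 by (auto simp: sgn01_def)
    qed
  qed
qed

lemma prob_part:
  fixes w wt :: "nat \<Rightarrow> nat \<Rightarrow> real" and \<theta> :: real
  assumes k: "k > 0" and inj: "inj_on vs {..<k}" and r: "r < k" and \<pi>N: "\<forall>j<M. \<pi> r j < N"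
    and cd: "\<forall>l<N. card {j\<in>{..<M}. \<pi> r j = l} \<le> d"
    and mom: "\<And>b. measure_pmf.expectation (D b) (\<lambda>x. of_bool (x r) :: real) = measure_pmf.expectation (D False) (\<lambda>x. of_bool (x r))"
    and wt: "\<And>i. i \<noteq> r \<Longrightarrow> wt i = w i"
    and g: "\<And>s. s < L \<Longrightarrow> g s < M" and ginj: "inj_on g {..<L}"
    and ratio: "\<And>s. Suc s < L \<Longrightarrow> 2 * \<bar>wt r (g (Suc s))\<bar> \<le> \<bar>wt r (g s)\<bar>"
    and last: "2 * \<delta> \<le> \<bar>wt r (g (L - 1))\<bar>" and \<delta>: "0 < \<delta>"
  defines "a \<equiv> (\<lambda>j. w r j - wt r j)"
  defines "\<theta>t \<equiv> \<theta> - measure_pmf.expectation (edge_dist k N M vs \<pi> D False) (\<lambda>y. ip M a (y (vs r)))"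
  defines "h \<equiv> (\<lambda>y. sgn01 ((\<Sum>i<k. ip M (w i) (y (vs i))) - \<theta>))"
  defines "ht \<equiv> (\<lambda>y. sgn01 ((\<Sum>i<k. ip M (wt i) (y (vs i))) - \<theta>t))"
  shows "\<bar>measure_pmf.expectation (edge_dist k N M vs \<pi> D b) ht - measure_pmf.expectation (edge_dist k N M vs \<pi> D b) h\<bar>
     \<le> (2 + 2 * real d) * (\<Sum>j<M. (a j)\<^sup>2) / \<delta>\<^sup>2 + (1 - 1/(real k)^2/2) ^ L"
proof -
  let ?E = "edge_dist k N M vs \<pi> D b"
  define p0 where "p0 = measure_pmf.expectation (D False) (\<lambda>x. of_bool (x r) :: real)"
  define \<mu> where "\<mu> = (\<Sum>j<M. a j * ((1 - 1/(real k)^2) * p0 + 1/(real k)^2/2))"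
  have \<mu>E: "measure_pmf.expectation (edge_dist k N M vs \<pi> D False) (\<lambda>y. ip M a (y (vs r))) = \<mu>"
    unfolding \<mu>_def p0_def by (rule ET[where \<pi>=\<pi> and k=k and vs=vs and M=M, OF k inj r \<pi>N])
  define T where "T y = ip M a (y (vs r))" for y :: "nat \<Rightarrow> nat \<Rightarrow> bool"
  define Aa where "Aa y = (\<Sum>i<k. ip M (wt i) (y (vs i))) - \<theta>t" for y :: "nat \<Rightarrow> nat \<Rightarrow> bool"
  have ipd: "ip M (w i) v - ip M (wt i) v = (if i = r then ip M a v else 0)" for i v
  proof -
    have "ip M (w r) v - ip M (wt r) v = ip M a v"
      unfolding ip_def a_def by (simp only: sum_subtractf[symmetric] left_diff_distrib)
    then show ?thesis using wt[of i] by auto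
  qed
  have sumd: "(\<Sum>i<k. ip M (w i) (y (vs i))) = (\<Sum>i<k. ip M (wt i) (y (vs i))) + T y" for y
  proof -
    have "(\<Sum>i<k. ip M (w i) (y (vs i))) - (\<Sum>i<k. ip M (wt i) (y (vs i))) = (\<Sum>i<k. if i = r then ip M a (y (vs i)) else 0)"
      by (simp only: sum_subtractf[symmetric] ipd)
    also have "\<dots> = T y" using r by (subst sum.delta) (auto simp: T_def)
    finally show ?thesis by simp
  qed
  have hA: "h y = sgn01 (Aa y + (T y - \<mu>))" for y
    unfolding h_def Aa_def \<theta>t_def \<mu>E sumd by (simp add: algebra_simps)
  have htA: "ht y = sgn01 (Aa y)" for y unfolding ht_def Aa_def by simp
  have pw: "\<bar>ht y - h y\<bar> \<le> (T y - \<mu>)\<^sup>2 / \<delta>\<^sup>2 + of_bool (\<bar>Aa y\<bar> < \<delta>)" for y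
    unfolding hA htA by (rule sgn_diff[OF \<delta>])
  have b01: "\<bar>sgn01 x\<bar> \<le> 1" for x by (simp add: sgn01_def)
  define Ba where "Ba = (\<Sum>j<M. \<bar>a j\<bar>)"
  have bT: "\<bar>(T y - \<mu>)\<^sup>2\<bar> \<le> (Ba + \<bar>\<mu>\<bar>)\<^sup>2" for y
  proof -
    have "\<bar>T y - \<mu>\<bar> \<le> Ba + \<bar>\<mu>\<bar>" using ip_bd[of M a "y (vs r)"] unfolding T_def Ba_def by linarith
    then show ?thesis by (simp add: sq_le)
  qed
  have iT: "integrable (measure_pmf ?E) (\<lambda>y. (T y - \<mu>)\<^sup>2)" by (rule int_bdd) (rule bT)
  have iO: "integrable (measure_pmf ?E) (\<lambda>y. of_bool (\<bar>Aa y\<bar> < \<delta>) :: real)" by (rule int_bdd[where B=1]) simp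
  have ih: "integrable (measure_pmf ?E) h" unfolding h_def by (rule int_bdd) (rule b01)
  have iht: "integrable (measure_pmf ?E) ht" unfolding ht_def by (rule int_bdd) (rule b01)
  have "\<bar>measure_pmf.expectation ?E ht - measure_pmf.expectation ?E h\<bar> = \<bar>measure_pmf.expectation ?E (\<lambda>y. ht y - h y)\<bar>"
    using ih iht by simp
  also have "\<dots> \<le> measure_pmf.expectation ?E (\<lambda>y. \<bar>ht y - h y\<bar>)"
    using integral_norm_bound[of ?E "\<lambda>y. ht y - h y"] by simp
  also have "\<dots> \<le> measure_pmf.expectation ?E (\<lambda>y. (T y - \<mu>)\<^sup>2 / \<delta>\<^sup>2 + of_bool (\<bar>Aa y\<bar> < \<delta>))"
    by (rule integral_mono) (use pw iT iO ih iht in auto)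
  also have "\<dots> = measure_pmf.expectation ?E (\<lambda>y. (T y - \<mu>)\<^sup>2) / \<delta>\<^sup>2 + measure_pmf.prob ?E {y. \<bar>Aa y\<bar> < \<delta>}"
    using iT iO by (simp add: exp_of_bool)
  also have "\<dots> \<le> (2 + 2 * real d) * (\<Sum>j<M. (a j)\<^sup>2) / \<delta>\<^sup>2 + (1 - 1/(real k)^2/2) ^ L"
  proof (rule add_mono)
    have "measure_pmf.expectation ?E (\<lambda>y. (T y - \<mu>)\<^sup>2) \<le> (2 + 2 * real d) * (\<Sum>j<M. (a j)\<^sup>2)"
      unfolding T_def \<mu>_def by (rule var_T[where \<pi>=\<pi> and k=k and vs=vs and M=M, OF k inj r \<pi>N cd]) (use mom in \<open>simp add: p0_def\<close>)
    then show "measure_pmf.expectation ?E (\<lambda>y. (T y - \<mu>)\<^sup>2) / \<delta>\<^sup>2 \<le> (2 + 2 * real d) * (\<Sum>j<M. (a j)\<^sup>2) / \<delta>\<^sup>2"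
      by (simp add: divide_right_mono)
    show "measure_pmf.prob ?E {y. \<bar>Aa y\<bar> < \<delta>} \<le> (1 - 1/(real k)^2/2) ^ L"
      unfolding Aa_def by (rule anti[where \<pi>=\<pi> and k=k and vs=vs and M=M and g=g and wt=wt and L=L and \<delta>=\<delta> and r=r, OF k inj r g ginj ratio last])
  qed
  finally show ?thesis .
qed



lemma idx_props: "distinct (idx_order n u)" "set (idx_order n u) = {..<n}" "length (idx_order n u) = n"
  unfolding idx_order_def by auto

lemma Cset_props:
  assumes "0 \<le> \<tau>"
  shows "card (Cset \<tau> n u) \<le> n \<and> (\<forall>m < card (Cset \<tau> n u). m < n \<and> \<tau> * sqrt (sigma2 n u m) < \<bar>u (idx_order n u ! m)\<bar>)"
proof -
  let ?ord = "idx_order n u"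
  define P where "P m = (m < n \<and> \<bar>u (?ord ! m)\<bar> \<le> \<tau> * sqrt (sigma2 n u m))" for m
  show ?thesis
  proof (cases "\<exists>m. P m")
    case True
    define c where "c = (LEAST m. P m)"
    have Pc: "P c" unfolding c_def using True by (metis LeastI)
    then have cn: "c < n" by (simp add: P_def)
    have C: "Cset \<tau> n u = set (take c ?ord)" using True unfolding Cset_def c_def P_def[abs_def] Let_def by simp
    have cc: "card (Cset \<tau> n u) = c" unfolding C using cn idx_props[of n u]
      by (simp add: distinct_card)
    show ?thesis unfolding cc
    proof (rule conjI)
      show "c \<le> n" using cn by simp
      show "\<forall>m<c. m < n \<and> \<tau> * sqrt (sigma2 n u m) < \<bar>u (?ord ! m)\<bar>"
      proof (intro allI impI)
        fix m assume m: "m < c"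
        then have "\<not> P m" unfolding c_def by (rule not_less_Least)
        then show "m < n \<and> \<tau> * sqrt (sigma2 n u m) < \<bar>u (?ord ! m)\<bar>" using m cn by (auto simp: P_def)
      qed
    qed
  next
    case False
    have C: "Cset \<tau> n u = {..<n}" using False unfolding Cset_def P_def[abs_def] Let_def by auto
    show ?thesis unfolding C using False by (auto simp: P_def not_le)
  qed
qed

lemma sigma2_nonneg: "0 \<le> sigma2 n u m" unfolding sigma2_def by (auto intro: sum_nonneg)

lemma sigma2_step: "m < n \<Longrightarrow> sigma2 n u m = (u (idx_order n u ! m))\<^sup>2 + sigma2 n u (Suc m)"
  unfolding sigma2_def by (rule sum.atLeast_Suc_lessThan)

lemma decay:
  fixes \<tau> :: real
  assumes \<tau>: "0 \<le> \<tau>" "\<tau> \<le> 1" and mc: "m + j \<le> card (Cset \<tau> n u)"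
  shows "sigma2 n u (m + j) \<le> (1 - \<tau>\<^sup>2) ^ j * sigma2 n u m"
  using mc
proof (induction j)
  case 0 then show ?case by simp
next
  case (Suc j)
  have ih: "sigma2 n u (m + j) \<le> (1 - \<tau>\<^sup>2) ^ j * sigma2 n u m" using Suc by simp
  have mj: "m + j < card (Cset \<tau> n u)" using Suc.prems by simp
  with Cset_props[OF \<tau>(1), of n u] have mn: "m + j < n" and gt: "\<tau> * sqrt (sigma2 n u (m + j)) < \<bar>u (idx_order n u ! (m + j))\<bar>" by auto
  have "(\<tau> * sqrt (sigma2 n u (m + j)))\<^sup>2 \<le> (\<bar>u (idx_order n u ! (m + j))\<bar>)\<^sup>2"
    using gt \<tau> sigma2_nonneg[of n u "m+j"] by (intro sq_le) (auto simp: abs_mult)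
  then have "\<tau>\<^sup>2 * sigma2 n u (m + j) \<le> (u (idx_order n u ! (m + j)))\<^sup>2"
    by (simp add: power_mult_distrib sigma2_nonneg)
  then have "sigma2 n u (Suc (m + j)) \<le> (1 - \<tau>\<^sup>2) * sigma2 n u (m + j)"
    using sigma2_step[OF mn, of u] by (simp add: algebra_simps)
  also have "\<dots> \<le> (1 - \<tau>\<^sup>2) * ((1 - \<tau>\<^sup>2) ^ j * sigma2 n u m)"
    by (rule mult_left_mono[OF ih]) (use \<tau> in \<open>simp add: power_le_one\<close>)
  finally show ?case by simp
qed

lemma comb:
  fixes u :: "nat \<Rightarrow> real" and \<tau> t :: real
  assumes \<tau>: "0 < \<tau>" "\<tau> \<le> 1" and G: "0 < G" and L: "0 < L"
    and Gdec: "(1 - \<tau>\<^sup>2) ^ G \<le> \<tau>\<^sup>2 / 4"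
    and size: "(L - 1) * G + R \<le> nat \<lfloor>t\<rfloor>" and R: "0 < R"
    and Ct: "t \<le> real (card (Cset \<tau> n u))"
  shows "\<exists>g \<delta>. (\<forall>s<L. g s < n) \<and> inj_on g {..<L} \<and> (\<forall>s<L. g s \<in> Bset t n u)
     \<and> (\<forall>s. Suc s < L \<longrightarrow> 2 * \<bar>u (g (Suc s))\<bar> \<le> \<bar>u (g s)\<bar>) \<and> 2 * \<delta> \<le> \<bar>u (g (L - 1))\<bar> \<and> 0 < \<delta>
     \<and> (\<Sum>j<n. (u j - truncate u (Bset t n u) j)\<^sup>2) / \<delta>\<^sup>2 \<le> 4 * (1 - \<tau>\<^sup>2) ^ R / \<tau>\<^sup>2"
proof -
  define ord where "ord = idx_order n u"
  define c where "c = card (Cset \<tau> n u)"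
  define T0 where "T0 = nat \<lfloor>t\<rfloor>"
  define x where "x = \<tau>\<^sup>2"
  have x: "0 < x" "x \<le> 1" using \<tau> by (auto simp: x_def power_le_one)
  have cprops: "c \<le> n" "\<And>m. m < c \<Longrightarrow> m < n \<and> \<tau> * sqrt (sigma2 n u m) < \<bar>u (ord ! m)\<bar>"
    using Cset_props[of \<tau> n u] \<tau> unfolding c_def ord_def by auto
  have T0c: "T0 \<le> c"
  proof -
    have "real_of_int \<lfloor>t\<rfloor> \<le> real c" using of_int_floor_le[of t] Ct unfolding c_def by linarith
    then have "\<lfloor>t\<rfloor> \<le> int c" by (metis of_int_le_iff of_int_of_nat_eq)
    then show ?thesis by (simp add: T0_def nat_le_iff)
  qed
  define p where "p s = s * G" for s
  define g where "g s = ord ! p s" for s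
  have oprops: "distinct ord" "set ord = {..<n}" "length ord = n" using idx_props[of n u] by (auto simp: ord_def)
  define v where "v m = \<bar>u (ord ! m)\<bar>" for m
  define \<sigma> where "\<sigma> m = sigma2 n u m" for m
  have \<sigma>0: "0 \<le> \<sigma> m" for m by (simp add: \<sigma>_def sigma2_nonneg)
  have \<sigma>v: "(v m)\<^sup>2 \<le> \<sigma> m" if "m < n" for m
    using sigma2_step[OF that, of u] sigma2_nonneg[of n u "Suc m"] by (simp add: v_def \<sigma>_def ord_def)
  have v\<sigma>: "x * \<sigma> m < (v m)\<^sup>2" if "m < c" for m
  proof -
    have "\<tau> * sqrt (\<sigma> m) < v m" using cprops(2)[OF that] by (simp add: v_def \<sigma>_def)
    moreover have "0 \<le> \<tau> * sqrt (\<sigma> m)" using \<tau> \<sigma>0[of m] by simp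
    ultimately have "(\<tau> * sqrt (\<sigma> m))\<^sup>2 < (v m)\<^sup>2" by (intro power_strict_mono) auto
    then show ?thesis using \<sigma>0[of m] by (simp add: x_def power_mult_distrib)
  qed
  have vpos: "0 < v m" if "m < c" for m
  proof -
    have "\<tau> * sqrt (\<sigma> m) < v m" using cprops(2)[OF that] by (simp add: v_def \<sigma>_def)
    moreover have "0 \<le> \<tau> * sqrt (\<sigma> m)" using \<tau> \<sigma>0[of m] by simp
    ultimately show ?thesis by linarith
  qed
  have dec: "\<sigma> (m + j) \<le> (1 - x) ^ j * \<sigma> m" if "m + j \<le> c" for m j
    using decay[of \<tau> m j n u] \<tau> that by (simp add: \<sigma>_def x_def c_def)
  define p where "p s = s * G" for s
  define g where "g s = ord ! p s" for s
  have T0n: "(L - 1) * G + R \<le> T0" using size by (simp add: T0_def)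
  have pT: "p s < T0" if "s < L" for s
  proof -
    have "p s \<le> (L - 1) * G" unfolding p_def using that by (intro mult_right_mono) auto
    then show ?thesis using T0n R by linarith
  qed
  have pc: "p s < c" if "s < L" for s using pT[OF that] T0c by linarith
  have pn: "p s < n" if "s < L" for s using pc[OF that] cprops(1) by linarith
  have gn: "\<forall>s<L. g s < n"
  proof (intro allI impI)
    fix s assume "s < L"
    then have "ord ! p s \<in> set ord" using pn oprops by (intro nth_mem) auto
    then show "g s < n" using oprops by (auto simp: g_def)
  qed
  have ginj: "inj_on g {..<L}"
  proof (rule inj_onI)
    fix s s' assume ss: "s \<in> {..<L}" "s' \<in> {..<L}" "g s = g s'"
    then have "p s = p s'" using nth_eq_iff_index_eq[OF oprops(1), of "p s" "p s'"] pn oprops by (auto simp: g_def)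
    then show "s = s'" using G by (simp add: p_def)
  qed
  have Bset_eq: "Bset t n u = set (take T0 ord)" by (simp add: Bset_def T0_def ord_def)
  have inB: "ord ! m \<in> Bset t n u \<longleftrightarrow> m < T0" if "m < n" for m
  proof
    assume "ord ! m \<in> Bset t n u"
    then obtain i where i: "i < length (take T0 ord)" "take T0 ord ! i = ord ! m" unfolding Bset_eq in_set_conv_nth by auto
    then have "ord ! i = ord ! m" "i < T0" "i < n" using oprops by auto
    then show "m < T0" using nth_eq_iff_index_eq[OF oprops(1), of i m] that oprops by auto
  next
    assume "m < T0"
    then have "take T0 ord ! m = ord ! m" by simp
    moreover have "m < length (take T0 ord)" using \<open>m < T0\<close> that oprops by simp
    ultimately show "ord ! m \<in> Bset t n u" unfolding Bset_eq by (metis nth_mem)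
  qed
  have gB: "\<forall>s<L. g s \<in> Bset t n u" using inB pn pT by (auto simp: g_def)
  have ratio: "\<forall>s. Suc s < L \<longrightarrow> 2 * \<bar>u (g (Suc s))\<bar> \<le> \<bar>u (g s)\<bar>"
  proof (intro allI impI)
    fix s assume s: "Suc s < L"
    have ps: "p (Suc s) = p s + G" by (simp add: p_def)
    have "(v (p (Suc s)))\<^sup>2 \<le> \<sigma> (p (Suc s))" using \<sigma>v pn s by blast
    also have "\<dots> \<le> (1 - x) ^ G * \<sigma> (p s)" unfolding ps using pc[OF s] ps by (intro dec) simp
    also have "\<dots> \<le> (x / 4) * \<sigma> (p s)" using Gdec \<sigma>0 by (intro mult_right_mono) (auto simp: x_def)
    also have "\<dots> \<le> (v (p s))\<^sup>2 / 4" using v\<sigma>[OF pc[of s]] s by simp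
    finally have "(2 * v (p (Suc s)))\<^sup>2 \<le> (v (p s))\<^sup>2" by (simp add: power_mult_distrib)
    then have "2 * v (p (Suc s)) \<le> v (p s)" by (rule power2_le_imp_le) (simp add: v_def)
    then show "2 * \<bar>u (g (Suc s))\<bar> \<le> \<bar>u (g s)\<bar>" by (simp add: v_def g_def)
  qed
  define l where "l = p (L - 1)"
  have lL: "L - 1 < L" using L by simp
  define \<delta> where "\<delta> = v l / 2"
  have \<delta>0: "0 < \<delta>" unfolding \<delta>_def l_def using vpos[OF pc[OF lL]] by simp
  have last: "2 * \<delta> \<le> \<bar>u (g (L - 1))\<bar>" by (simp add: \<delta>_def v_def g_def l_def)
  have tail: "(\<Sum>j<n. (u j - truncate u (Bset t n u) j)\<^sup>2) = \<sigma> T0"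
  proof -
    have "(\<Sum>j<n. (u j - truncate u (Bset t n u) j)\<^sup>2) = (\<Sum>m<n. (u (ord ! m) - truncate u (Bset t n u) (ord ! m))\<^sup>2)"
      by (rule sum.reindex_bij_betw[symmetric], rule bij_betw_nth) (use oprops in auto)
    also have "\<dots> = (\<Sum>m<n. if m < T0 then 0 else (u (ord ! m))\<^sup>2)"
      by (intro sum.cong refl) (auto simp: truncate_def inB)
    also have "\<dots> = (\<Sum>m\<in>{T0..<n}. if m < T0 then 0 else (u (ord ! m))\<^sup>2)"
      by (rule sum.mono_neutral_right) auto
    also have "\<dots> = \<sigma> T0" unfolding \<sigma>_def sigma2_def ord_def by (intro sum.cong refl) auto
    finally show ?thesis .
  qed
  have lR: "l + (T0 - l) = T0" "R \<le> T0 - l" using T0n pT[OF lL] unfolding l_def p_def by auto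
  have "\<sigma> T0 \<le> (1 - x) ^ (T0 - l) * \<sigma> l" using dec[of l "T0 - l"] lR T0c by simp
  also have "\<dots> \<le> (1 - x) ^ R * \<sigma> l"
    by (intro mult_right_mono power_decreasing) (use x lR \<sigma>0 in auto)
  also have "\<dots> \<le> (1 - x) ^ R * ((v l)\<^sup>2 / x)"
  proof (intro mult_left_mono)
    show "\<sigma> l \<le> (v l)\<^sup>2 / x" using v\<sigma>[OF pc[OF lL]] x by (simp add: l_def field_simps)
  qed (use x in auto)
  finally have "\<sigma> T0 / \<delta>\<^sup>2 \<le> (1 - x) ^ R * ((v l)\<^sup>2 / x) / \<delta>\<^sup>2" by (rule divide_right_mono) simp
  also have "\<dots> = 4 * (1 - x) ^ R / x" unfolding \<delta>_def using vpos[OF pc[OF lL]] x by (simp add: l_def field_simps)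
  finally have fin: "(\<Sum>j<n. (u j - truncate u (Bset t n u) j)\<^sup>2) / \<delta>\<^sup>2 \<le> 4 * (1 - \<tau>\<^sup>2) ^ R / \<tau>\<^sup>2"
    unfolding tail x_def .
  show ?thesis
    by (rule exI[of _ g], rule exI[of _ \<delta>]) (use gn ginj gB ratio last \<delta>0 fin in blast)
qed



lemma FH_ev: "eventually (\<lambda>y::real. (2 * y\<^sup>2 * (ln 2 + 2 * ln y) + 1) * (ln 4 + 26 * ln y + 1) + ln 32 + 28 * ln y + y * ln 4 + 1
   \<le> 4 * y\<^sup>2 * (ln 2 + ln y) * (52 * ln y) + 10 * y * ln 4) at_top"
  by real_asymp

lemma pow_exp:
  fixes y :: real
  assumes "0 \<le> y" "y \<le> 1"
  shows "(1 - y) ^ n \<le> exp (- (y * real n))"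
proof -
  have "1 - y \<le> exp (- y)" using exp_ge_add_one_self[of "-y"] by simp
  then have "(1 - y) ^ n \<le> exp (- y) ^ n" by (rule power_mono) (use assms in simp)
  also have "\<dots> = exp (- (y * real n))" by (simp add: exp_of_nat_mult[symmetric] mult.commute)
  finally show ?thesis .
qed

lemma pow_exp_ln:
  fixes y z :: real
  assumes "0 < y" "y \<le> 1" "0 < z" "ln z / y \<le> real n"
  shows "(1 - y) ^ n \<le> 1 / z"
proof -
  have "(1 - y) ^ n \<le> exp (- (y * real n))" by (rule pow_exp) (use assms in auto)
  also have "\<dots> \<le> exp (- ln z)"
  proof -
    have "ln z \<le> y * real n" using assms by (simp add: divide_le_eq mult.commute)
    then show ?thesis by simp
  qed
  also have "\<dots> = 1 / z" using assms by (simp add: exp_minus exp_ln inverse_eq_divide)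
  finally show ?thesis .
qed

lemma nat_ceil_ge: "y \<le> real (nat \<lceil>y\<rceil>)"
  by linarith

lemma nat_ceil_le: "0 \<le> y \<Longrightarrow> real (nat \<lceil>y\<rceil>) \<le> y + 1"
  by linarith

lemma numeric:
  fixes k :: nat
  assumes k2: "2 \<le> k"
    and FH: "(2 * (real k)\<^sup>2 * (ln 2 + 2 * ln (real k)) + 1) * (ln 4 + 26 * ln (real k) + 1) + ln 32 + 28 * ln (real k) + real k * ln 4 + 1
   \<le> 4 * (real k)\<^sup>2 * (ln 2 + ln (real k)) * (52 * ln (real k)) + 10 * real k * ln 4"
  defines "\<tau> \<equiv> 1 / (real k)^13"
  defines "d \<equiv> (4::nat)^k"
  defines "t \<equiv> (1 / \<tau>\<^sup>2) * (real_of_int (\<lceil>4 * (real k)\<^sup>2 * ln (2 * real k)\<rceil> * \<lceil>4 * ln (1 / \<tau>)\<rceil>)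
                           + ln (1 / \<tau>) + 10 * ln (real d))"
  defines "G \<equiv> nat \<lceil>ln (4 / \<tau>\<^sup>2) / \<tau>\<^sup>2\<rceil>"
  defines "L \<equiv> nat \<lceil>2 * (real k)\<^sup>2 * ln (2 * (real k)\<^sup>2)\<rceil>"
  defines "R \<equiv> nat \<lceil>ln (16 * (real k)\<^sup>2 * (1 + real d) / \<tau>\<^sup>2) / \<tau>\<^sup>2\<rceil>"
  shows "0 < \<tau> \<and> \<tau> \<le> 1 \<and> 0 < G \<and> 0 < L \<and> 0 < R \<and> (1 - \<tau>\<^sup>2) ^ G \<le> \<tau>\<^sup>2 / 4
    \<and> (L - 1) * G + R \<le> nat \<lfloor>t\<rfloor>
    \<and> (2 + 2 * real d) * (4 * (1 - \<tau>\<^sup>2) ^ R / \<tau>\<^sup>2) + (1 - 1 / (real k)\<^sup>2 / 2) ^ L \<le> 1 / (real k)\<^sup>2"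
proof -
  define kr where "kr = real k"
  have kr2: "2 \<le> kr" using k2 by (simp add: kr_def)
  have lnk: "0 < ln kr" using kr2 by simp
  have k4: "4 \<le> kr\<^sup>2" using kr2 power_mono[of 2 kr 2] by simp
  have ln4: "0 < ln (4::real)" and ln2: "0 < ln (2::real)" by simp_all
  define P where "P = kr ^ 26"
  have P1: "1 \<le> P" using kr2 unfolding P_def by (simp add: one_le_power)
  define x where "x = \<tau>\<^sup>2"
  have xP: "x = 1 / P" by (simp add: x_def \<tau>_def P_def kr_def power_divide flip: power_mult)
  have x01: "0 < x" "x \<le> 1" using P1 by (auto simp: xP)
  have \<tau>01: "0 < \<tau>" "\<tau> \<le> 1" using kr2 by (auto simp: \<tau>_def kr_def[symmetric] power_le_one one_le_power)
  have lnP: "ln P = 26 * ln kr" using kr2 by (simp add: P_def ln_realpow)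
  have ln\<tau>: "ln (1 / \<tau>) = 13 * ln kr" using kr2 by (simp add: \<tau>_def kr_def[symmetric] ln_realpow)
  have lnd: "ln (real d) = real k * ln 4" by (simp add: d_def ln_realpow)
  have ln4x: "ln (4 / x) = ln 4 + 26 * ln kr" using P1 by (simp add: xP ln_mult lnP)
  have l4x: "0 < ln (4 / x)" using ln4x lnk ln4 by linarith
  have lnRarg: "ln (16 * kr\<^sup>2 * (1 + real d) / x) \<le> ln 32 + 28 * ln kr + real k * ln 4"
  proof -
    have dpos: "0 < real d" by (simp add: d_def)
    have "ln (16 * kr\<^sup>2 * (1 + real d) / x) = ln 16 + 2 * ln kr + ln (1 + real d) + 26 * ln kr"
      using kr2 dpos P1 by (simp add: xP ln_mult lnP ln_realpow)
    also have "ln (1 + real d) \<le> ln (2 * real d)"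
    proof (subst ln_le_cancel_iff)
      show "0 < 1 + real d" "0 < 2 * real d" using dpos by auto
      show "1 + real d \<le> 2 * real d" using dpos by (simp add: d_def one_le_power)
    qed
    also have "ln (2 * real d) = ln 2 + real k * ln 4" using dpos by (simp add: ln_mult lnd)
    finally have "ln (16 * kr\<^sup>2 * (1 + real d) / x) \<le> ln 16 + 2 * ln kr + (ln 2 + real k * ln 4) + 26 * ln kr" by simp
    moreover have "ln (32::real) = ln 16 + ln 2" using ln_mult[of 16 2] by simp
    ultimately show ?thesis by linarith
  qed
  have Rarg1: "1 < 16 * kr\<^sup>2 * (1 + real d) / x"
  proof -
    have a: "1 \<le> kr\<^sup>2" using kr2 by (simp add: one_le_power)
    have b: "1 \<le> 1 + real d" by simp
    have ab: "1 \<le> kr\<^sup>2 * (1 + real d)" using mult_mono[OF a b] by simp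
    have "1 \<le> kr\<^sup>2 * (1 + real d) * P" using mult_mono[OF ab P1] by simp
    moreover have "16 * kr\<^sup>2 * (1 + real d) / x = 16 * (kr\<^sup>2 * (1 + real d) * P)" by (simp add: xP)
    ultimately show "1 < 16 * kr\<^sup>2 * (1 + real d) / x" by linarith
  qed
  have lnRpos: "0 < ln (16 * kr\<^sup>2 * (1 + real d) / x)" using Rarg1 by simp
  have ln2k2: "ln (2 * kr\<^sup>2) = ln 2 + 2 * ln kr" using kr2 by (simp add: ln_mult ln_realpow)
  have ln2k: "ln (2 * kr) = ln 2 + ln kr" using kr2 by (simp add: ln_mult)
  have Gge: "ln (4 / x) / x \<le> real G" unfolding G_def x_def[symmetric] by (rule nat_ceil_ge)
  have Gle: "real G \<le> P * (ln 4 + 26 * ln kr) + 1"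
  proof -
    have "real G \<le> ln (4 / x) / x + 1" unfolding G_def x_def[symmetric] by (rule nat_ceil_le) (use l4x x01 in simp)
    also have "ln (4 / x) / x = P * (ln 4 + 26 * ln kr)" unfolding ln4x by (simp add: xP)
    finally show ?thesis .
  qed
  have G0: "0 < G" using Gge l4x x01 by (smt (verit) divide_pos_pos of_nat_0_less_iff)
  have Gdec: "(1 - x) ^ G \<le> x / 4"
    using pow_exp_ln[of x "4 / x" G] x01 Gge by simp
  have Lge: "2 * kr\<^sup>2 * ln (2 * kr\<^sup>2) \<le> real L" unfolding L_def kr_def by (rule nat_ceil_ge)
  have L2pos: "0 < 2 * kr\<^sup>2 * ln (2 * kr\<^sup>2)"
  proof -
    have "0 < ln 2 + 2 * ln kr" using ln2 lnk by linarith
    moreover have "0 < kr\<^sup>2" using kr2 by simp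
    ultimately show ?thesis unfolding ln2k2 by simp
  qed
  have Lle: "real L \<le> 2 * kr\<^sup>2 * (ln 2 + 2 * ln kr) + 1"
    unfolding L_def kr_def[symmetric] using nat_ceil_le[of "2 * kr\<^sup>2 * ln (2 * kr\<^sup>2)"] L2pos ln2k2 by simp
  have L0: "0 < L" using Lge L2pos by linarith
  have Ldec: "(1 - 1 / kr\<^sup>2 / 2) ^ L \<le> 1 / (2 * kr\<^sup>2)"
  proof (rule pow_exp_ln)
    show "0 < 1 / kr\<^sup>2 / 2" "0 < 2 * kr\<^sup>2" using k4 by auto
    show "1 / kr\<^sup>2 / 2 \<le> 1" using k4 by (simp add: divide_le_eq)
    show "ln (2 * kr\<^sup>2) / (1 / kr\<^sup>2 / 2) \<le> real L" using Lge kr2 by (simp add: field_simps)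
  qed
  have Rge: "ln (16 * kr\<^sup>2 * (1 + real d) / x) / x \<le> real R" unfolding R_def x_def[symmetric] kr_def by (rule nat_ceil_ge)
  have Rle: "real R \<le> P * (ln 32 + 28 * ln kr + real k * ln 4) + 1"
  proof -
    have "real R \<le> ln (16 * kr\<^sup>2 * (1 + real d) / x) / x + 1"
      unfolding R_def x_def[symmetric] kr_def[symmetric] by (rule nat_ceil_le) (use lnRpos x01 in simp)
    also have "\<dots> \<le> P * (ln 32 + 28 * ln kr + real k * ln 4) + 1"
      using lnRarg P1 by (simp add: xP)
    finally show ?thesis .
  qed
  have R0: "0 < R" using Rge lnRpos x01 by (smt (verit) divide_pos_pos of_nat_0_less_iff)
  have Rdec: "(1 - x) ^ R \<le> 1 / (16 * kr\<^sup>2 * (1 + real d) / x)"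
  proof (rule pow_exp_ln)
    show "0 < x" "x \<le> 1" using x01 by auto
    show "0 < 16 * kr\<^sup>2 * (1 + real d) / x" using Rarg1 by linarith
    show "ln (16 * kr\<^sup>2 * (1 + real d) / x) / x \<le> real R" by (rule Rge)
  qed
  have N3: "(2 + 2 * real d) * (4 * (1 - x) ^ R / x) + (1 - 1 / kr\<^sup>2 / 2) ^ L \<le> 1 / kr\<^sup>2"
  proof -
    have "(2 + 2 * real d) * (4 * (1 - x) ^ R / x) \<le> (2 + 2 * real d) * (4 * (1 / (16 * kr\<^sup>2 * (1 + real d) / x)) / x)"
      by (intro mult_left_mono divide_right_mono) (use Rdec x01 in auto)
    also have "\<dots> = 1 / (2 * kr\<^sup>2)"
    proof -
      have nz: "1 + real d \<noteq> 0" "kr \<noteq> 0" "x \<noteq> 0" using x01 kr2 by auto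
      have gen: "(2 * D1) * (4 * (1 / (16 * kr\<^sup>2 * D1 / x)) / x) = 1 / (2 * kr\<^sup>2)"
        if "D1 \<noteq> 0" for D1 :: real using that nz by (simp add: field_simps)
      have "(2 + 2 * real d) = 2 * (1 + real d)" by simp
      then show ?thesis using gen[OF nz(1)] by simp
    qed
    finally have "(2 + 2 * real d) * (4 * (1 - x) ^ R / x) \<le> 1 / (2 * kr\<^sup>2)" .
    moreover have "1 / (2 * kr\<^sup>2) + 1 / (2 * kr\<^sup>2) = 1 / kr\<^sup>2" by simp
    ultimately show ?thesis using Ldec by linarith
  qed
  define A1 where "A1 = \<lceil>4 * kr\<^sup>2 * ln (2 * kr)\<rceil>"
  define A2 where "A2 = \<lceil>4 * ln (1 / \<tau>)\<rceil>"
  have A1ge: "4 * kr\<^sup>2 * (ln 2 + ln kr) \<le> real_of_int A1" unfolding A1_def ln2k[symmetric] by linarith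
  have A2ge: "52 * ln kr \<le> real_of_int A2" unfolding A2_def ln\<tau> by linarith
  have A12: "4 * kr\<^sup>2 * (ln 2 + ln kr) * (52 * ln kr) \<le> real_of_int (A1 * A2)"
  proof -
    have h0: "0 \<le> 4 * kr\<^sup>2 * (ln 2 + ln kr)" using lnk ln2 by simp
    have h1: "0 \<le> 52 * ln kr" using lnk by simp
    have h2: "0 \<le> real_of_int A1" using h0 A1ge by linarith
    have "4 * kr\<^sup>2 * (ln 2 + ln kr) * (52 * ln kr) \<le> real_of_int A1 * real_of_int A2"
      by (rule mult_mono[OF A1ge A2ge h2 h1])
    then show ?thesis by simp
  qed
  have tge: "P * (4 * kr\<^sup>2 * (ln 2 + ln kr) * (52 * ln kr) + 10 * real k * ln 4) \<le> t"
  proof -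
    have "t = P * (real_of_int (A1 * A2) + 13 * ln kr + 10 * (real k * ln 4))"
      unfolding t_def A1_def A2_def kr_def[symmetric] ln\<tau> lnd x_def[symmetric] by (simp add: xP)
    moreover have "4 * kr\<^sup>2 * (ln 2 + ln kr) * (52 * ln kr) + 10 * real k * ln 4 \<le> real_of_int (A1 * A2) + 13 * ln kr + 10 * (real k * ln 4)"
      using A12 lnk by simp
    then have "P * (4 * kr\<^sup>2 * (ln 2 + ln kr) * (52 * ln kr) + 10 * real k * ln 4) \<le> P * (real_of_int (A1 * A2) + 13 * ln kr + 10 * (real k * ln 4))"
      using P1 by (intro mult_left_mono) auto
    ultimately show ?thesis by simp
  qed
  have LGR: "real L * real G + real R \<le> P * ((2 * kr\<^sup>2 * (ln 2 + 2 * ln kr) + 1) * (ln 4 + 26 * ln kr + 1) + ln 32 + 28 * ln kr + real k * ln 4 + 1)"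
  proof -
    have ab0: "0 \<le> 2 * kr\<^sup>2 * (ln 2 + 2 * ln kr) + 1" using lnk by simp
    have "real L * real G \<le> (2 * kr\<^sup>2 * (ln 2 + 2 * ln kr) + 1) * (P * (ln 4 + 26 * ln kr) + 1)"
      by (rule mult_mono[OF Lle Gle]) (use ab0 in auto)
    also have "\<dots> \<le> (2 * kr\<^sup>2 * (ln 2 + 2 * ln kr) + 1) * (P * (ln 4 + 26 * ln kr + 1))"
      by (rule mult_left_mono[OF _ ab0]) (use P1 in \<open>simp add: algebra_simps\<close>)
    finally have "real L * real G \<le> P * ((2 * kr\<^sup>2 * (ln 2 + 2 * ln kr) + 1) * (ln 4 + 26 * ln kr + 1))"
      by (simp add: algebra_simps)
    then show ?thesis using Rle P1 by (simp add: algebra_simps)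
  qed
  have FH': "(2 * kr\<^sup>2 * (ln 2 + 2 * ln kr) + 1) * (ln 4 + 26 * ln kr + 1) + ln 32 + 28 * ln kr + real k * ln 4 + 1
      \<le> 4 * kr\<^sup>2 * (ln 2 + ln kr) * (52 * ln kr) + 10 * real k * ln 4" using FH by (simp add: kr_def)
  have "real (L * G + R) \<le> t"
  proof -
    have "real (L * G + R) = real L * real G + real R" by simp
    also have "\<dots> \<le> P * (4 * kr\<^sup>2 * (ln 2 + ln kr) * (52 * ln kr) + 10 * real k * ln 4)"
      using LGR mult_left_mono[OF FH', of P] P1 by linarith
    also have "\<dots> \<le> t" by (rule tge)
    finally show ?thesis .
  qed
  then have "int (L * G + R) \<le> \<lfloor>t\<rfloor>" by (simp add: le_floor_iff)
  then have "L * G + R \<le> nat \<lfloor>t\<rfloor>" by linarith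
  moreover have "(L - 1) * G \<le> L * G" by simp
  ultimately have N2: "(L - 1) * G + R \<le> nat \<lfloor>t\<rfloor>" by linarith
  show ?thesis using \<tau>01 G0 L0 R0 Gdec N2 N3 by (simp add: x_def kr_def)
qed



lemma main_inner:
  fixes k N M :: nat and vs :: "nat \<Rightarrow> nat" and \<pi> :: "nat \<Rightarrow> nat \<Rightarrow> nat"
    and D :: "bool \<Rightarrow> (nat \<Rightarrow> bool) pmf" and w :: "nat \<Rightarrow> nat \<Rightarrow> real" and \<theta> :: real and r :: nat
  assumes k2: "2 \<le> k"
    and FHk: "(2 * (real k)\<^sup>2 * (ln 2 + 2 * ln (real k)) + 1) * (ln 4 + 26 * ln (real k) + 1) + ln 32 + 28 * ln (real k) + real k * ln 4 + 1
   \<le> 4 * (real k)\<^sup>2 * (ln 2 + ln (real k)) * (52 * ln (real k)) + 10 * real k * ln 4"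
  defines "\<tau> \<equiv> 1 / (real k)^13"
  defines "d \<equiv> (4::nat)^k"
  defines "t \<equiv> (1 / \<tau>\<^sup>2) * (real_of_int (\<lceil>4 * (real k)\<^sup>2 * ln (2 * real k)\<rceil> * \<lceil>4 * ln (1 / \<tau>)\<rceil>)
                           + ln (1 / \<tau>) + 10 * ln (real d))"
  defines "E \<equiv> edge_dist k N M vs \<pi> D"
  defines "wt \<equiv> (\<lambda>i. if i = r then truncate (w r) (Bset t M (w r)) else w i)"
  defines "a \<equiv> (\<lambda>j. w r j - wt r j)"
  defines "\<theta>t \<equiv> \<theta> - measure_pmf.expectation (E False) (\<lambda>y. ip M a (y (vs r)))"
  defines "h \<equiv> (\<lambda>y. sgn01 ((\<Sum>i<k. ip M (w i) (y (vs i))) - \<theta>))"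
  defines "ht \<equiv> (\<lambda>y. sgn01 ((\<Sum>i<k. ip M (wt i) (y (vs i))) - \<theta>t))"
  assumes inj: "inj_on vs {..<k}"
    and \<pi>N: "\<forall>i<k. \<forall>j<M. \<pi> i j < N"
    and supp: "\<forall>b. set_pmf (D b) \<subseteq> {x. \<forall>i\<ge>k. \<not> x i}"
    and mom: "\<forall>S::nat multiset. set_mset S \<subseteq> {..<k} \<and> size S \<le> 4 \<longrightarrow>
        measure_pmf.expectation (D False) (\<lambda>x. \<Prod>i\<in>#S. of_bool (x i) :: real) =
        measure_pmf.expectation (D True) (\<lambda>x. \<Prod>i\<in>#S. of_bool (x i) :: real)"
    and cd: "\<forall>i<k. \<forall>l<N. card {j\<in>{..<M}. \<pi> i j = l} \<le> d"
    and r: "r < k"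
    and Ct: "real (card (Cset \<tau> M (w r))) \<ge> t"
  shows "\<forall>b. \<bar>measure_pmf.expectation (E b) ht - measure_pmf.expectation (E b) h\<bar> \<le> 1 / (real k)\<^sup>2"
proof
  fix b
  define G where "G = nat \<lceil>ln (4 / \<tau>\<^sup>2) / \<tau>\<^sup>2\<rceil>"
  define L where "L = nat \<lceil>2 * (real k)\<^sup>2 * ln (2 * (real k)\<^sup>2)\<rceil>"
  define R where "R = nat \<lceil>ln (16 * (real k)\<^sup>2 * (1 + real d) / \<tau>\<^sup>2) / \<tau>\<^sup>2\<rceil>"
  have nm: "0 < \<tau> \<and> \<tau> \<le> 1 \<and> 0 < G \<and> 0 < L \<and> 0 < R \<and> (1 - \<tau>\<^sup>2) ^ G \<le> \<tau>\<^sup>2 / 4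
    \<and> (L - 1) * G + R \<le> nat \<lfloor>t\<rfloor>
    \<and> (2 + 2 * real d) * (4 * (1 - \<tau>\<^sup>2) ^ R / \<tau>\<^sup>2) + (1 - 1 / (real k)\<^sup>2 / 2) ^ L \<le> 1 / (real k)\<^sup>2"
    unfolding \<tau>_def d_def t_def G_def L_def R_def by (rule numeric[OF k2 FHk])
  then have \<tau>: "0 < \<tau>" "\<tau> \<le> 1" and G: "0 < G" and L: "0 < L" and R: "0 < R"
    and Gdec: "(1 - \<tau>\<^sup>2) ^ G \<le> \<tau>\<^sup>2 / 4" and size: "(L - 1) * G + R \<le> nat \<lfloor>t\<rfloor>"
    and N3: "(2 + 2 * real d) * (4 * (1 - \<tau>\<^sup>2) ^ R / \<tau>\<^sup>2) + (1 - 1 / (real k)\<^sup>2 / 2) ^ L \<le> 1 / (real k)\<^sup>2"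
    by auto
  obtain g \<delta> where g: "\<forall>s<L. g s < M" and ginj: "inj_on g {..<L}" and gB: "\<forall>s<L. g s \<in> Bset t M (w r)"
     and ratio: "\<forall>s. Suc s < L \<longrightarrow> 2 * \<bar>w r (g (Suc s))\<bar> \<le> \<bar>w r (g s)\<bar>" and last: "2 * \<delta> \<le> \<bar>w r (g (L - 1))\<bar>"
     and \<delta>: "0 < \<delta>"
     and tail: "(\<Sum>j<M. (w r j - truncate (w r) (Bset t M (w r)) j)\<^sup>2) / \<delta>\<^sup>2 \<le> 4 * (1 - \<tau>\<^sup>2) ^ R / \<tau>\<^sup>2"
    using comb[OF \<tau> G L Gdec size R Ct] by blast
  have wtg: "wt r (g s) = w r (g s)" if "s < L" for s using gB that by (simp add: wt_def truncate_def)
  have mom1: "measure_pmf.expectation (D b') (\<lambda>x. of_bool (x r) :: real) = measure_pmf.expectation (D False) (\<lambda>x. of_bool (x r))" for b'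
  proof -
    have "measure_pmf.expectation (D False) (\<lambda>x. \<Prod>i\<in>#{#r#}. of_bool (x i) :: real) =
        measure_pmf.expectation (D True) (\<lambda>x. \<Prod>i\<in>#{#r#}. of_bool (x i) :: real)"
      using mom[rule_format, of "{#r#}"] r by simp
    then show ?thesis by (cases b') simp_all
  qed
  have pp: "\<bar>measure_pmf.expectation (E b) ht - measure_pmf.expectation (E b) h\<bar>
     \<le> (2 + 2 * real d) * (\<Sum>j<M. (a j)\<^sup>2) / \<delta>\<^sup>2 + (1 - 1/(real k)^2/2) ^ L"
    unfolding E_def ht_def h_def \<theta>t_def a_def E_def
  proof (rule prob_part[where wt=wt and g=g and L=L and \<delta>=\<delta>])
    show "0 < k" using k2 by simp
    show "inj_on vs {..<k}" by (rule inj)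
    show "r < k" by (rule r)
    show "\<forall>j<M. \<pi> r j < N" using \<pi>N r by auto
    show "\<forall>l<N. card {j\<in>{..<M}. \<pi> r j = l} \<le> d" using cd r by auto
    show "measure_pmf.expectation (D b') (\<lambda>x. of_bool (x r) :: real) = measure_pmf.expectation (D False) (\<lambda>x. of_bool (x r))" for b'
      by (rule mom1)
    show "wt i = w i" if "i \<noteq> r" for i using that by (simp add: wt_def)
    show "g s < M" if "s < L" for s using g that by auto
    show "inj_on g {..<L}" by (rule ginj)
    show "2 * \<bar>wt r (g (Suc s))\<bar> \<le> \<bar>wt r (g s)\<bar>" if "Suc s < L" for s
      using ratio that wtg[of s] wtg[of "Suc s"] by auto
    show "2 * \<delta> \<le> \<bar>wt r (g (L - 1))\<bar>" using last wtg[of "L - 1"] L by simp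
    show "0 < \<delta>" by (rule \<delta>)
  qed
  have "(\<Sum>j<M. (a j)\<^sup>2) = (\<Sum>j<M. (w r j - truncate (w r) (Bset t M (w r)) j)\<^sup>2)"
    by (simp add: a_def wt_def)
  then have "(2 + 2 * real d) * (\<Sum>j<M. (a j)\<^sup>2) / \<delta>\<^sup>2 \<le> (2 + 2 * real d) * (4 * (1 - \<tau>\<^sup>2) ^ R / \<tau>\<^sup>2)"
    using tail by (simp add: mult_left_mono times_divide_eq_right[symmetric] del: times_divide_eq_right)
  then show "\<bar>measure_pmf.expectation (E b) ht - measure_pmf.expectation (E b) h\<bar> \<le> 1 / (real k)\<^sup>2"
    using pp N3 by linarith
qed

theorem lemma5p9:
  "\<exists>K::nat. \<forall>k\<ge>K. \<forall>(N::nat) (M::nat) (vs::nat \<Rightarrow> nat) (\<pi>::nat \<Rightarrow> nat \<Rightarrow> nat)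
      (D::bool \<Rightarrow> (nat \<Rightarrow> bool) pmf) (w::nat \<Rightarrow> nat \<Rightarrow> real) (\<theta>::real) (r::nat).
    (let \<tau> = 1 / (real k)^13;
         d = (4::nat)^k;
         t = (1 / \<tau>\<^sup>2) * (real_of_int (\<lceil>4 * (real k)\<^sup>2 * ln (2 * real k)\<rceil> * \<lceil>4 * ln (1 / \<tau>)\<rceil>)
                           + ln (1 / \<tau>) + 10 * ln (real d));
         E = edge_dist k N M vs \<pi> D;
         wt = (\<lambda>i. if i = r then truncate (w r) (Bset t M (w r)) else w i);
         a = (\<lambda>j. w r j - wt r j);
         \<theta>t = \<theta> - measure_pmf.expectation (E False) (\<lambda>y. ip M a (y (vs r)));
         h = (\<lambda>y. sgn01 ((\<Sum>i<k. ip M (w i) (y (vs i))) - \<theta>));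
         ht = (\<lambda>y. sgn01 ((\<Sum>i<k. ip M (wt i) (y (vs i))) - \<theta>t))
     in
     inj_on vs {..<k} \<longrightarrow>
     (\<forall>i<k. \<forall>j<M. \<pi> i j < N) \<longrightarrow>
     (\<forall>b. set_pmf (D b) \<subseteq> {x. \<forall>i\<ge>k. \<not> x i}) \<longrightarrow>
     (\<forall>S::nat multiset. set_mset S \<subseteq> {..<k} \<and> size S \<le> 4 \<longrightarrow>
        measure_pmf.expectation (D False) (\<lambda>x. \<Prod>i\<in>#S. of_bool (x i) :: real) =
        measure_pmf.expectation (D True) (\<lambda>x. \<Prod>i\<in>#S. of_bool (x i) :: real)) \<longrightarrow>
     (\<forall>i<k. \<forall>l<N. card {j\<in>{..<M}. \<pi> i j = l} \<le> d) \<longrightarrow>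
     r < k \<longrightarrow>
     real (card (Cset \<tau> M (w r))) \<ge> t \<longrightarrow>
     (\<forall>b. \<bar>measure_pmf.expectation (E b) ht - measure_pmf.expectation (E b) h\<bar> \<le> 1 / (real k)\<^sup>2))"
proof -
  have "eventually (\<lambda>k::nat. (2 * (real k)\<^sup>2 * (ln 2 + 2 * ln (real k)) + 1) * (ln 4 + 26 * ln (real k) + 1) + ln 32 + 28 * ln (real k) + real k * ln 4 + 1
   \<le> 4 * (real k)\<^sup>2 * (ln 2 + ln (real k)) * (52 * ln (real k)) + 10 * real k * ln 4) sequentially"
    by (rule eventually_compose_filterlim[OF FH_ev filterlim_real_sequentially])
  then obtain K0 where K0: "\<And>k. k \<ge> K0 \<Longrightarrow> (2 * (real k)\<^sup>2 * (ln 2 + 2 * ln (real k)) + 1) * (ln 4 + 26 * ln (real k) + 1) + ln 32 + 28 * ln (real k) + real k * ln 4 + 1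
   \<le> 4 * (real k)\<^sup>2 * (ln 2 + ln (real k)) * (52 * ln (real k)) + 10 * real k * ln 4"
    unfolding eventually_sequentially by blast
  show ?thesis
  proof (rule exI[of _ "max K0 2"], intro allI impI)
    fix k N M vs \<pi> D w \<theta> r
    assume kK: "max K0 2 \<le> k"
    then have k2: "2 \<le> k" by auto
    show "let \<tau> = 1 / (real k)^13;
         d = (4::nat)^k;
         t = (1 / \<tau>\<^sup>2) * (real_of_int (\<lceil>4 * (real k)\<^sup>2 * ln (2 * real k)\<rceil> * \<lceil>4 * ln (1 / \<tau>)\<rceil>)
                           + ln (1 / \<tau>) + 10 * ln (real d));
         E = edge_dist k N M vs \<pi> D;
         wt = (\<lambda>i. if i = r then truncate (w r) (Bset t M (w r)) else w i);
         a = (\<lambda>j. w r j - wt r j);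
         \<theta>t = \<theta> - measure_pmf.expectation (E False) (\<lambda>y. ip M a (y (vs r)));
         h = (\<lambda>y. sgn01 ((\<Sum>i<k. ip M (w i) (y (vs i))) - \<theta>));
         ht = (\<lambda>y. sgn01 ((\<Sum>i<k. ip M (wt i) (y (vs i))) - \<theta>t))
     in
     inj_on vs {..<k} \<longrightarrow>
     (\<forall>i<k. \<forall>j<M. \<pi> i j < N) \<longrightarrow>
     (\<forall>b. set_pmf (D b) \<subseteq> {x. \<forall>i\<ge>k. \<not> x i}) \<longrightarrow>
     (\<forall>S::nat multiset. set_mset S \<subseteq> {..<k} \<and> size S \<le> 4 \<longrightarrow>
        measure_pmf.expectation (D False) (\<lambda>x. \<Prod>i\<in>#S. of_bool (x i) :: real) =
        measure_pmf.expectation (D True) (\<lambda>x. \<Prod>i\<in>#S. of_bool (x i) :: real)) \<longrightarrow>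
     (\<forall>i<k. \<forall>l<N. card {j\<in>{..<M}. \<pi> i j = l} \<le> d) \<longrightarrow>
     r < k \<longrightarrow>
     real (card (Cset \<tau> M (w r))) \<ge> t \<longrightarrow>
     (\<forall>b. \<bar>measure_pmf.expectation (E b) ht - measure_pmf.expectation (E b) h\<bar> \<le> 1 / (real k)\<^sup>2)"
      unfolding Let_def
      by (intro impI, rule main_inner[OF k2 K0[of k]]) (use kK in auto)
  qed
qed


end
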